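(* In the setting below, the cokernel of $\bar\rho_{\mathfrak{ab}}\colon\bar G_{\mathfrak{ab}}\to\bar A_{\mathfrak{ab}}$ is free abelian.
   Context: Let $G$ be a group generated by $a_1,\dots,a_n$ with $z=a_1\cdots a_n$ central. Let $S_1,\dots,S_m\subseteq\{1,\dots,n\}$ with $|S_i\cap S_r|\le1$ for $i\neq r$. For $S\subseteq\{1,\dots,n\}$ let $G_S$ be the quotient of $G$ by the normal closure of $\{a_j:j\notin S\}$; let $a_{ij}$ be the image of $a_j$ in $G_{S_i}$ and $z_i=a_{i1}\cdots a_{in}$ (central in $G_{S_i}$). Let $\bar G=G/\langle z\rangle$, $\bar G_{S_i}=G_{S_i}/\langle z_i\rangle$, and assume each $\bar G_{S_i}$ is free of rank $|S_i|-1$, the images of any $|S_i|-1$ of the $a_{ij}$, $j\in S_i$, forming a free basis. Let $A=\prod_iG_{S_i}$, $\bar A=\prod_i\bar G_{S_i}$, $\rho\colon G\to A$ the product of projections and $\bar\rho\colon\bar G\to\bar A$ the induced map. Assume the abelianizations $G_{\mathfrak{ab}}$ and $A_{\mathfrak{ab}}$ are free abelian with bases the images of $a_1,\dots,a_n$ and of $a_{ij}$ ($1\le i\le m$, $j\in S_i$) respectively. The subscript $\mathfrak{ab}$ denotes abelianization of groups and homomorphisms. *)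

theory Defs
  imports "HOL-Algebra.Algebra"
begin

definition ordprod :: "('a, 'b) monoid_scheme \<Rightarrow> (nat \<Rightarrow> 'a) \<Rightarrow> nat \<Rightarrow> 'a" where
  "ordprod G a n = foldr (\<lambda>x y. x \<otimes>\<^bsub>G\<^esub> y) (map a [1..<Suc n]) \<one>\<^bsub>G\<^esub>"

definition normal_closure :: "('a, 'b) monoid_scheme \<Rightarrow> 'a set \<Rightarrow> 'a set" where
  "normal_closure G Xs =
     generate G (\<Union>g\<in>carrier G. \<Union>x\<in>Xs. {g \<otimes>\<^bsub>G\<^esub> x \<otimes>\<^bsub>G\<^esub> inv\<^bsub>G\<^esub> g})"

definition abelianization :: "('a, 'b) monoid_scheme \<Rightarrow> 'a set monoid" where
  "abelianization G = G Mod (derived G (carrier G))"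

definition ab_class :: "('a, 'b) monoid_scheme \<Rightarrow> 'a \<Rightarrow> 'a set" where
  "ab_class G x = derived G (carrier G) #>\<^bsub>G\<^esub> x"

(* Reduced words over an index set T: letters (j, True) = f j, (j, False) = inverse of f j. *)
definition reduced_word :: "'i set \<Rightarrow> ('i \<times> bool) list \<Rightarrow> bool" where
  "reduced_word T w \<longleftrightarrow> set (map fst w) \<subseteq> T \<and>
     (\<forall>k. Suc k < length w \<longrightarrow> \<not> (fst (w ! k) = fst (w ! Suc k) \<and> snd (w ! k) \<noteq> snd (w ! Suc k)))"

definition eval_word :: "('a, 'b) monoid_scheme \<Rightarrow> ('i \<Rightarrow> 'a) \<Rightarrow> ('i \<times> bool) list \<Rightarrow> 'a" where
  "eval_word G f w =
     foldr (\<lambda>l y. (if snd l then f (fst l) else inv\<^bsub>G\<^esub> (f (fst l))) \<otimes>\<^bsub>G\<^esub> y) w \<one>\<^bsub>G\<^esub>"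

definition free_basis :: "('a, 'b) monoid_scheme \<Rightarrow> ('i \<Rightarrow> 'a) \<Rightarrow> 'i set \<Rightarrow> bool" where
  "free_basis G f T \<longleftrightarrow> group G \<and> f ` T \<subseteq> carrier G \<and> inj_on f T \<and>
     generate G (f ` T) = carrier G \<and>
     (\<forall>w. reduced_word T w \<and> w \<noteq> [] \<longrightarrow> eval_word G f w \<noteq> \<one>\<^bsub>G\<^esub>)"

definition free_group_of_rank :: "('a, 'b) monoid_scheme \<Rightarrow> nat \<Rightarrow> bool" where
  "free_group_of_rank G r \<longleftrightarrow> (\<exists>B. card B = r \<and> finite B \<and> free_basis G id B)"

definition abelian_basis :: "('a, 'b) monoid_scheme \<Rightarrow> ('i \<Rightarrow> 'a) \<Rightarrow> 'i set \<Rightarrow> bool" where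
  "abelian_basis G f T \<longleftrightarrow> comm_group G \<and> finite T \<and> f ` T \<subseteq> carrier G \<and> inj_on f T \<and>
     generate G (f ` T) = carrier G \<and>
     (\<forall>k :: 'i \<Rightarrow> int. finprod G (\<lambda>j. f j [^]\<^bsub>G\<^esub> k j) T = \<one>\<^bsub>G\<^esub> \<longrightarrow> (\<forall>j\<in>T. k j = 0))"

definition free_abelian :: "('a, 'b) monoid_scheme \<Rightarrow> bool" where
  "free_abelian G \<longleftrightarrow> comm_group G \<and> (\<exists>B :: 'a set. G \<cong> free_Abelian_group B)"

definition GS :: "('a, 'b) monoid_scheme \<Rightarrow> (nat \<Rightarrow> 'a) \<Rightarrow> nat \<Rightarrow> nat set \<Rightarrow> 'a set monoid" where
  "GS G a n S = G Mod (normal_closure G (a ` ({1..n} - S)))"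

definition projS :: "('a, 'b) monoid_scheme \<Rightarrow> (nat \<Rightarrow> 'a) \<Rightarrow> nat \<Rightarrow> nat set \<Rightarrow> 'a \<Rightarrow> 'a set" where
  "projS G a n S x = normal_closure G (a ` ({1..n} - S)) #>\<^bsub>G\<^esub> x"

definition zS :: "('a, 'b) monoid_scheme \<Rightarrow> (nat \<Rightarrow> 'a) \<Rightarrow> nat \<Rightarrow> nat set \<Rightarrow> 'a set" where
  "zS G a n S = ordprod (GS G a n S) (\<lambda>j. projS G a n S (a j)) n"

definition barGS :: "('a, 'b) monoid_scheme \<Rightarrow> (nat \<Rightarrow> 'a) \<Rightarrow> nat \<Rightarrow> nat set \<Rightarrow> 'a set set monoid" where
  "barGS G a n S = GS G a n S Mod (generate (GS G a n S) {zS G a n S})"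

definition barprojS :: "('a, 'b) monoid_scheme \<Rightarrow> (nat \<Rightarrow> 'a) \<Rightarrow> nat \<Rightarrow> nat set \<Rightarrow> 'a set \<Rightarrow> 'a set set" where
  "barprojS G a n S y = generate (GS G a n S) {zS G a n S} #>\<^bsub>GS G a n S\<^esub> y"

definition barG :: "('a, 'b) monoid_scheme \<Rightarrow> (nat \<Rightarrow> 'a) \<Rightarrow> nat \<Rightarrow> 'a set monoid" where
  "barG G a n = G Mod (generate G {ordprod G a n})"

definition Aprod :: "('a, 'b) monoid_scheme \<Rightarrow> (nat \<Rightarrow> 'a) \<Rightarrow> nat \<Rightarrow> (nat \<Rightarrow> nat set) \<Rightarrow> nat
                     \<Rightarrow> (nat \<Rightarrow> 'a set) monoid" where
  "Aprod G a n S m = product_group {1..m} (\<lambda>i. GS G a n (S i))"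

definition barAprod :: "('a, 'b) monoid_scheme \<Rightarrow> (nat \<Rightarrow> 'a) \<Rightarrow> nat \<Rightarrow> (nat \<Rightarrow> nat set) \<Rightarrow> nat
                     \<Rightarrow> (nat \<Rightarrow> 'a set set) monoid" where
  "barAprod G a n S m = product_group {1..m} (\<lambda>i. barGS G a n (S i))"

definition aA :: "('a, 'b) monoid_scheme \<Rightarrow> (nat \<Rightarrow> 'a) \<Rightarrow> nat \<Rightarrow> (nat \<Rightarrow> nat set) \<Rightarrow> nat
                     \<Rightarrow> nat \<times> nat \<Rightarrow> (nat \<Rightarrow> 'a set)" where
  "aA G a n S m ij = (\<lambda>k\<in>{1..m}. if k = fst ij then projS G a n (S k) (a (snd ij))
                                  else \<one>\<^bsub>GS G a n (S k)\<^esub>)"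

(* \<bar>\<rho> : \<bar>G \<rightarrow> \<bar>A, induced by \<rho> = product of projections (computed on a representative) *)
definition rho_bar :: "('a, 'b) monoid_scheme \<Rightarrow> (nat \<Rightarrow> 'a) \<Rightarrow> nat \<Rightarrow> (nat \<Rightarrow> nat set) \<Rightarrow> nat
                     \<Rightarrow> 'a set \<Rightarrow> (nat \<Rightarrow> 'a set set)" where
  "rho_bar G a n S m C =
     (\<lambda>i\<in>{1..m}. barprojS G a n (S i) (projS G a n (S i) (SOME x. x \<in> C)))"

definition rho_bar_ab :: "('a, 'b) monoid_scheme \<Rightarrow> (nat \<Rightarrow> 'a) \<Rightarrow> nat \<Rightarrow> (nat \<Rightarrow> nat set) \<Rightarrow> nat
                     \<Rightarrow> 'a set set \<Rightarrow> (nat \<Rightarrow> 'a set set) set" where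
  "rho_bar_ab G a n S m D =
     ab_class (barAprod G a n S m) (rho_bar G a n S m (SOME C. C \<in> D))"

definition cokernel :: "('c, 'd) monoid_scheme \<Rightarrow> ('e, 'f) monoid_scheme \<Rightarrow> ('c \<Rightarrow> 'e) \<Rightarrow> 'e set monoid" where
  "cokernel H K f = K Mod (f ` carrier H)"

end

theory Submission
  imports Defs
begin


definition incv :: "('e \<Rightarrow> 'v) \<Rightarrow> ('e \<Rightarrow> 'v) \<Rightarrow> 'v \<Rightarrow> 'e \<Rightarrow> int" where
  "incv t h u f = (if t f = u then 1 else 0) - (if h f = u then 1 else 0)"

lemma graph_basis:
  fixes E :: "'e set" and t h :: "'e \<Rightarrow> 'v"
  assumes "finite E"
  shows "\<exists>B c w. B \<subseteq> E \<and>
     (\<forall>e\<in>E. \<exists>k::'v\<Rightarrow>int. \<forall>f\<in>E.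
         (if f = e then 1 else 0) - (if f \<in> B then c e f else 0) = k (t f) - k (h f)) \<and>
     (\<forall>b\<in>B. \<forall>u. (\<Sum>f\<in>E. w b f * incv t h u f) = 0) \<and>
     (\<forall>b\<in>B. \<forall>b'\<in>B. w b b' = (if b = b' then 1 else (0::int)))"
  using assms
proof (induction E arbitrary: t h rule: finite_induct)
  case empty
  show ?case by (rule exI[of _ "{}"]) auto
next
  case (insert e0 E0)
  show ?case
  proof (cases "t e0 = h e0")
    case True
    obtain B c w where B: "B \<subseteq> E0"
      and a: "\<forall>e\<in>E0. \<exists>k::'v\<Rightarrow>int. \<forall>f\<in>E0.
         (if f = e then 1 else 0) - (if f \<in> B then c e f else 0) = k (t f) - k (h f)"
      and b: "\<forall>b\<in>B. \<forall>u. (\<Sum>f\<in>E0. w b f * incv t h u f) = 0"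
      and cc: "\<forall>b\<in>B. \<forall>b'\<in>B. w b b' = (if b = b' then 1 else (0::int))"
      using insert.IH[of t h] by blast
    define B' where "B' = insert e0 B"
    define c' where "c' e b = (if e = e0 then (if b = e0 then 1 else 0) else (if b = e0 then 0 else c e b))" for e b
    define w' where "w' b f = (if b = e0 then (if f = e0 then 1 else 0) else (if f = e0 then 0 else w b f))" for b f
    have e0B: "e0 \<notin> B" using B insert.hyps by auto
    show ?thesis
    proof (rule exI[of _ B'], rule exI[of _ c'], rule exI[of _ w'], intro conjI ballI allI)
      show "B' \<subseteq> insert e0 E0" using B by (auto simp: B'_def)
    next
      fix e assume e: "e \<in> insert e0 E0"
      show "\<exists>k::'v\<Rightarrow>int. \<forall>f\<in>insert e0 E0.
         (if f = e then 1 else 0) - (if f \<in> B' then c' e f else 0) = k (t f) - k (h f)"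
      proof (cases "e = e0")
        case True
        show ?thesis by (rule exI[of _ "\<lambda>_. 0"]) (auto simp: True B'_def c'_def)
      next
        case False
        then have eE0: "e \<in> E0" using e by auto
        then obtain k where k: "\<forall>f\<in>E0. (if f = e then 1 else 0) - (if f \<in> B then c e f else 0) = k (t f) - k (h f)"
          using a by blast
        show ?thesis
        proof (rule exI[of _ k], intro ballI)
          fix f assume f: "f \<in> insert e0 E0"
          show "(if f = e then 1 else 0) - (if f \<in> B' then c' e f else 0) = k (t f) - k (h f)"
          proof (cases "f = e0")
            case True then show ?thesis using \<open>t e0 = h e0\<close> False by (simp add: B'_def c'_def)
          next
            case False
            then have "f \<in> E0" using f by auto
            have eq: "(if f \<in> B' then c' e f else 0) = (if f \<in> B then c e f else 0)"
              using False \<open>e \<noteq> e0\<close> by (simp add: B'_def c'_def)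
            show ?thesis using k[rule_format, OF \<open>f \<in> E0\<close>] by (simp only: eq)
          qed
        qed
      qed
    next
      fix b u assume b': "b \<in> B'"
      show "(\<Sum>f\<in>insert e0 E0. w' b f * incv t h u f) = 0"
      proof (cases "b = e0")
        case True
        have "(\<Sum>f\<in>E0. w' b f * incv t h u f) = 0"
          using insert.hyps True by (intro sum.neutral) (auto simp: w'_def)
        then show ?thesis using insert.hyps \<open>t e0 = h e0\<close> True
          by (simp add: w'_def incv_def)
      next
        case False
        then have "b \<in> B" using b' by (auto simp: B'_def)
        have "(\<Sum>f\<in>insert e0 E0. w' b f * incv t h u f) = (\<Sum>f\<in>E0. w b f * incv t h u f)"
          using insert.hyps False by (simp add: w'_def, intro sum.cong) auto
        then show ?thesis using b \<open>b \<in> B\<close> by simp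
      qed
    next
      fix b b' assume "b \<in> B'" "b' \<in> B'"
      then show "w' b b' = (if b = b' then 1 else 0)"
        using cc e0B by (auto simp: B'_def w'_def)
    qed
  next
    case False
    define v where "v = t e0"
    define ww where "ww = h e0"
    have vw: "v \<noteq> ww" using False by (simp add: v_def ww_def)
    define r where "r x = (if x = ww then v else x)" for x
    define t' where "t' = r \<circ> t"
    define h' where "h' = r \<circ> h"
    obtain B c w where B: "B \<subseteq> E0"
      and a: "\<forall>e\<in>E0. \<exists>k::'v\<Rightarrow>int. \<forall>f\<in>E0.
         (if f = e then 1 else 0) - (if f \<in> B then c e f else 0) = k (t' f) - k (h' f)"
      and b: "\<forall>b\<in>B. \<forall>u. (\<Sum>f\<in>E0. w b f * incv t' h' u f) = 0"
      and cc: "\<forall>b\<in>B. \<forall>b'\<in>B. w b b' = (if b = b' then 1 else (0::int))"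
      using insert.IH[of t' h'] by blast
    have e0B: "e0 \<notin> B" using B insert.hyps by auto
    have inc_other: "incv t' h' u f = incv t h u f" if "u \<noteq> v" "u \<noteq> ww" for u f
      using that by (auto simp: incv_def t'_def h'_def r_def)
    have inc_v: "incv t' h' v f = incv t h v f + incv t h ww f" for f
      using vw by (auto simp: incv_def t'_def h'_def r_def)
    have inc_w: "incv t' h' ww f = 0" for f
      using vw by (auto simp: incv_def t'_def h'_def r_def)
    have inc_e0: "incv t h u e0 = (if u = v then 1 else 0) - (if u = ww then 1 else 0)" for u
      by (simp add: incv_def v_def ww_def)
    define w' where "w' b f = (if f = e0 then - (\<Sum>g\<in>E0. w b g * incv t h v g) else w b f)" for b f
    obtain kk where kk: "\<forall>e\<in>E0. \<forall>f\<in>E0.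
         (if f = e then 1 else 0) - (if f \<in> B then c e f else 0) = kk e (t' f) - kk e (h' f)"
      using a by metis
    define c' where "c' e b = (if e = e0 then - (\<Sum>g\<in>E0. incv t h v g * c g b) else c e b)" for e b
    show ?thesis
    proof (rule exI[of _ B], rule exI[of _ c'], rule exI[of _ w'], intro conjI ballI allI)
      show "B \<subseteq> insert e0 E0" using B by auto
    next
      fix b u assume bB: "b \<in> B"
      have s: "(\<Sum>f\<in>insert e0 E0. w' b f * incv t h u f)
          = w' b e0 * incv t h u e0 + (\<Sum>f\<in>E0. w b f * incv t h u f)"
      proof -
        have "(\<Sum>f\<in>E0. w' b f * incv t h u f) = (\<Sum>f\<in>E0. w b f * incv t h u f)"
          using insert.hyps by (intro sum.cong) (auto simp: w'_def)
        then show ?thesis using insert.hyps by simp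
      qed
      show "(\<Sum>f\<in>insert e0 E0. w' b f * incv t h u f) = 0"
      proof -
        consider "u = v" | "u = ww" | "u \<noteq> v" "u \<noteq> ww" by blast
        then show ?thesis
        proof cases
          case 1 then show ?thesis using s vw by (simp add: w'_def inc_e0)
        next
          case 2
          have "(\<Sum>f\<in>E0. w b f * incv t h v f) + (\<Sum>f\<in>E0. w b f * incv t h ww f) =
                (\<Sum>f\<in>E0. w b f * incv t' h' v f)"
            by (simp add: inc_v distrib_left sum.distrib)
          also have "\<dots> = 0" using b bB by blast
          finally show ?thesis using s 2 vw by (simp add: w'_def inc_e0)
        next
          case 3
          have "(\<Sum>f\<in>E0. w b f * incv t h u f) = (\<Sum>f\<in>E0. w b f * incv t' h' u f)"
            using inc_other[OF 3] by simp
          also have "\<dots> = 0" using b bB by blast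
          finally show ?thesis using s 3 by (simp add: inc_e0)
        qed
      qed
    next
      fix b b' assume "b \<in> B" "b' \<in> B"
      then show "w' b b' = (if b = b' then 1 else 0)"
        using cc e0B by (auto simp: w'_def)
    next
      fix e assume e: "e \<in> insert e0 E0"
      show "\<exists>k::'v\<Rightarrow>int. \<forall>f\<in>insert e0 E0.
         (if f = e then 1 else 0) - (if f \<in> B then c' e f else 0) = k (t f) - k (h f)"
      proof (cases "e = e0")
        case False
        then have eE0: "e \<in> E0" using e by auto
        show ?thesis
        proof (rule exI[of _ "kk e \<circ> r"], intro ballI)
          fix f assume f: "f \<in> insert e0 E0"
          show "(if f = e then 1 else 0) - (if f \<in> B then c' e f else 0) = (kk e \<circ> r) (t f) - (kk e \<circ> r) (h f)"
          proof (cases "f = e0")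
            case True then show ?thesis using False e0B vw
              by (simp add: r_def v_def[symmetric] ww_def[symmetric])
          next
            case False
            then have "f \<in> E0" using f by auto
            have eq: "(if f \<in> B then c' e f else 0) = (if f \<in> B then c e f else 0)"
              using \<open>e \<noteq> e0\<close> by (simp add: c'_def)
            have "(if f = e then 1 else 0) - (if f \<in> B then c e f else 0) = kk e (t' f) - kk e (h' f)"
              using kk eE0 \<open>f \<in> E0\<close> by blast
            then show ?thesis by (simp only: eq t'_def h'_def o_def)
          qed
        qed
      next
        case True
        define K where "K x = (if x = v then 1 else 0) - (\<Sum>g\<in>E0. incv t h v g * kk g (r x))" for x
        show ?thesis
        proof (rule exI[of _ K], intro ballI)
          fix f assume f: "f \<in> insert e0 E0"
          have dg: "(if f = g then 1 else 0) = (if f \<in> B then c g f else 0) + (kk g (r (t f)) - kk g (r (h f)))"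
            if g: "g \<in> E0" for g
          proof (cases "f = e0")
            case True
            then show ?thesis using g insert.hyps e0B
              by (auto simp: r_def v_def[symmetric] ww_def[symmetric])
          next
            case False
            then have "f \<in> E0" using f by auto
            have "(if f = g then 1 else 0) - (if f \<in> B then c g f else 0) = kk g (t' f) - kk g (h' f)"
              using kk g \<open>f \<in> E0\<close> by blast
            then show ?thesis unfolding t'_def h'_def o_def by linarith
          qed
          have de0: "(if f = e0 then 1 else 0) = incv t h v f - (\<Sum>g\<in>E0. incv t h v g * (if f = g then 1 else 0))"
          proof (cases "f = e0")
            case True
            have "(\<Sum>g\<in>E0. incv t h v g * (if f = g then 1 else 0)) = 0"
              using True insert.hyps by (intro sum.neutral) auto
            then show ?thesis using insert.hyps vw True
              by (simp add: incv_def v_def ww_def)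
          next
            case False
            then have "f \<in> E0" using f by auto
            have "(\<Sum>g\<in>E0. incv t h v g * (if f = g then 1 else 0)) = (\<Sum>g\<in>E0. if f = g then incv t h v g else 0)"
              by (intro sum.cong) auto
            also have "\<dots> = incv t h v f" using \<open>f \<in> E0\<close> insert.hyps by (simp add: sum.delta)
            finally show ?thesis using False by simp
          qed
          also have "\<dots> = incv t h v f - (\<Sum>g\<in>E0. incv t h v g * ((if f \<in> B then c g f else 0) + (kk g (r (t f)) - kk g (r (h f)))))"
            using dg by simp
          also have "\<dots> = incv t h v f - (if f \<in> B then (\<Sum>g\<in>E0. incv t h v g * c g f) else 0)
               - ((\<Sum>g\<in>E0. incv t h v g * kk g (r (t f))) - (\<Sum>g\<in>E0. incv t h v g * kk g (r (h f))))"
            by (cases "f \<in> B") (simp_all add: distrib_left right_diff_distrib sum.distrib sum_subtractf)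
          also have "\<dots> = (if f \<in> B then c' e0 f else 0) + (K (t f) - K (h f))"
            by (cases "f \<in> B") (simp_all add: K_def c'_def incv_def sum_negf)
          finally show "(if f = e then 1 else 0) - (if f \<in> B then c' e f else 0) = K (t f) - K (h f)"
            using True by simp
        qed
      qed
    qed
  qed
qed



lemma quot_hom:
  assumes G: "group G" and N: "N \<lhd> G" and f: "f \<in> hom G H" and H: "group H"
    and kill: "\<And>x. x \<in> N \<Longrightarrow> f x = \<one>\<^bsub>H\<^esub>"
  obtains g where "g \<in> hom (G Mod N) H" "\<And>x. x \<in> carrier G \<Longrightarrow> g (N #>\<^bsub>G\<^esub> x) = f x"
proof -
  interpret G: group G by fact
  interpret H: group H by fact
  have sub: "subgroup N G" using N normal_imp_subgroup by blast
  have "f x = f y" if x: "x \<in> carrier G" and y: "y \<in> carrier G" and eq: "N #>\<^bsub>G\<^esub> x = N #>\<^bsub>G\<^esub> y" for x y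
  proof -
    have "y \<in> N #>\<^bsub>G\<^esub> x" using eq G.rcos_self[OF y sub] by simp
    then obtain n where n: "n \<in> N" "y = n \<otimes>\<^bsub>G\<^esub> x" unfolding r_coset_def by auto
    have nc: "n \<in> carrier G" using n sub subgroup.subset by blast
    have "f y = f n \<otimes>\<^bsub>H\<^esub> f x" using n nc x f by (simp add: hom_mult)
    also have "\<dots> = f x" using kill[OF n(1)] f x by (simp add: hom_in_carrier)
    finally show ?thesis by simp
  qed
  then show ?thesis using FactGroup_universal[OF f N] that by blast
qed

lemma comm_kills_derived:
  assumes G: "group G" and H: "comm_group H" and f: "f \<in> hom G H"
    and x: "x \<in> derived G (carrier G)"
  shows "f x = \<one>\<^bsub>H\<^esub>"
proof -
  interpret G: group G by fact
  interpret H: comm_group H by fact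
  interpret gh: group_hom G H f by (unfold_locales) (rule f)
  have sub: "subgroup (kernel G H f) G" by (rule gh.subgroup_kernel)
  have "derived_set G (carrier G) \<subseteq> kernel G H f"
  proof
    fix y assume "y \<in> derived_set G (carrier G)"
    then obtain h1 h2 where h: "h1 \<in> carrier G" "h2 \<in> carrier G"
      "y = h1 \<otimes>\<^bsub>G\<^esub> h2 \<otimes>\<^bsub>G\<^esub> inv\<^bsub>G\<^esub> h1 \<otimes>\<^bsub>G\<^esub> inv\<^bsub>G\<^esub> h2" by blast
    have "f y = f h1 \<otimes>\<^bsub>H\<^esub> f h2 \<otimes>\<^bsub>H\<^esub> inv\<^bsub>H\<^esub> (f h1) \<otimes>\<^bsub>H\<^esub> inv\<^bsub>H\<^esub> (f h2)"
      using h by simp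
    also have "\<dots> = \<one>\<^bsub>H\<^esub>" using h
      by (metis H.inv_closed H.l_inv H.m_assoc H.m_closed H.m_comm H.r_inv H.r_one gh.hom_closed)
    finally show "y \<in> kernel G H f" using h by (simp add: kernel_def)
  qed
  then have "derived G (carrier G) \<subseteq> kernel G H f"
    unfolding derived_def by (rule G.generate_subgroup_incl[OF _ sub])
  then show ?thesis using x by (auto simp: kernel_def)
qed

lemma ab_facts:
  assumes "group G"
  shows "comm_group (abelianization G)" "ab_class G \<in> hom G (abelianization G)"
    "derived G (carrier G) \<lhd> G"
proof -
  interpret G: group G by fact
  show "comm_group (abelianization G)" unfolding abelianization_def by (rule G.derived_quot_is_comm_group)
  show n: "derived G (carrier G) \<lhd> G" by (rule G.derived_self_is_normal)
  show "ab_class G \<in> hom G (abelianization G)"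
    unfolding abelianization_def ab_class_def[abs_def] using normal.r_coset_hom_Mod[OF n] .
qed

lemma ab_desc:
  assumes G: "group G" and H: "comm_group H" and f: "f \<in> hom G H"
  obtains g where "g \<in> hom (abelianization G) H" "\<And>x. x \<in> carrier G \<Longrightarrow> g (ab_class G x) = f x"
proof -
  have "group H" using H comm_group.axioms(2) by blast
  from quot_hom[OF G ab_facts(3)[OF G] f this comm_kills_derived[OF G H f]]
  show ?thesis using that unfolding abelianization_def ab_class_def by blast
qed

lemma central_generate_normal:
  assumes G: "group G" and c: "c \<in> carrier G"
    and cent: "\<forall>g\<in>carrier G. c \<otimes>\<^bsub>G\<^esub> g = g \<otimes>\<^bsub>G\<^esub> c"
  shows "generate G {c} \<lhd> G"
proof -
  interpret G: group G by fact
  show ?thesis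
  proof (rule G.normal_generateI)
    show "{c} \<subseteq> carrier G" using c by simp
    fix h g assume "h \<in> {c}" "g \<in> carrier G"
    then show "g \<otimes>\<^bsub>G\<^esub> h \<otimes>\<^bsub>G\<^esub> inv\<^bsub>G\<^esub> g \<in> {c}"
      using cent c by (simp add: G.m_assoc[symmetric]) (metis G.inv_closed G.m_assoc G.r_inv G.r_one)
  qed
qed

lemma normal_closure_facts:
  assumes G: "group G" and Xs: "Xs \<subseteq> carrier G"
  shows "normal_closure G Xs \<lhd> G" "Xs \<subseteq> normal_closure G Xs"
proof -
  interpret G: group G by fact
  define C where "C = (\<Union>g\<in>carrier G. \<Union>x\<in>Xs. {g \<otimes>\<^bsub>G\<^esub> x \<otimes>\<^bsub>G\<^esub> inv\<^bsub>G\<^esub> g})"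
  have Csub: "C \<subseteq> carrier G" using Xs by (auto simp: C_def)
  show "normal_closure G Xs \<lhd> G"
    unfolding normal_closure_def C_def[symmetric]
  proof (rule G.normal_generateI[OF Csub])
    fix h g assume h: "h \<in> C" and g: "g \<in> carrier G"
    then obtain g' x where gx: "g' \<in> carrier G" "x \<in> Xs" "h = g' \<otimes>\<^bsub>G\<^esub> x \<otimes>\<^bsub>G\<^esub> inv\<^bsub>G\<^esub> g'"
      by (auto simp: C_def)
    have xc: "x \<in> carrier G" using gx Xs by auto
    have "g \<otimes>\<^bsub>G\<^esub> h \<otimes>\<^bsub>G\<^esub> inv\<^bsub>G\<^esub> g = (g \<otimes>\<^bsub>G\<^esub> g') \<otimes>\<^bsub>G\<^esub> x \<otimes>\<^bsub>G\<^esub> inv\<^bsub>G\<^esub> (g \<otimes>\<^bsub>G\<^esub> g')"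
      using gx xc g by (simp add: G.m_assoc G.inv_mult_group)
    then show "g \<otimes>\<^bsub>G\<^esub> h \<otimes>\<^bsub>G\<^esub> inv\<^bsub>G\<^esub> g \<in> C" using gx g by (auto simp: C_def)
  qed
  show "Xs \<subseteq> normal_closure G Xs"
  proof
    fix x assume x: "x \<in> Xs"
    then have "\<one>\<^bsub>G\<^esub> \<otimes>\<^bsub>G\<^esub> x \<otimes>\<^bsub>G\<^esub> inv\<^bsub>G\<^esub> \<one>\<^bsub>G\<^esub> \<in> C" unfolding C_def using Xs
      by blast
    then have "x \<in> C" using x Xs by auto
    then show "x \<in> normal_closure G Xs" unfolding normal_closure_def C_def[symmetric]
      by (rule generate.incl)
  qed
qed

lemma normal_closure_kill:
  assumes G: "group G" and H: "group H" and Xs: "Xs \<subseteq> carrier G" and f: "f \<in> hom G H"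
    and k: "\<And>x. x \<in> Xs \<Longrightarrow> f x = \<one>\<^bsub>H\<^esub>" and y: "y \<in> normal_closure G Xs"
  shows "f y = \<one>\<^bsub>H\<^esub>"
proof -
  interpret G: group G by fact
  interpret H: group H by fact
  interpret gh: group_hom G H f by (unfold_locales) (rule f)
  have "(\<Union>g\<in>carrier G. \<Union>x\<in>Xs. {g \<otimes>\<^bsub>G\<^esub> x \<otimes>\<^bsub>G\<^esub> inv\<^bsub>G\<^esub> g}) \<subseteq> kernel G H f"
    using Xs k by (auto simp: kernel_def)
  then have "normal_closure G Xs \<subseteq> kernel G H f"
    unfolding normal_closure_def by (rule G.generate_subgroup_incl[OF _ gh.subgroup_kernel])
  then show ?thesis using y by (auto simp: kernel_def)
qed

lemma foldr_hom:
  assumes f: "f \<in> hom G H" and G: "group G" and H: "group H" and xs: "set xs \<subseteq> carrier G"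
  shows "f (foldr (\<lambda>x y. x \<otimes>\<^bsub>G\<^esub> y) xs \<one>\<^bsub>G\<^esub>) = foldr (\<lambda>x y. x \<otimes>\<^bsub>H\<^esub> y) (map f xs) \<one>\<^bsub>H\<^esub>"
  using xs
proof (induction xs)
  case Nil then show ?case using f G H by (simp add: hom_one)
next
  case (Cons x xs)
  have c: "foldr (\<lambda>x y. x \<otimes>\<^bsub>G\<^esub> y) xs \<one>\<^bsub>G\<^esub> \<in> carrier G"
    using Cons.prems G by (induction xs) (auto simp: group.is_monoid monoid.m_closed monoid.one_closed)
  then show ?case using Cons f by (simp add: hom_mult)
qed

lemma ordprod_hom:
  assumes f: "f \<in> hom G H" "group G" "group H" "a ` {1..n} \<subseteq> carrier G"
  shows "f (ordprod G a n) = ordprod H (f \<circ> a) n"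
proof -
  have "set (map a [1..<Suc n]) \<subseteq> carrier G" using assms(4) by auto
  from foldr_hom[OF assms(1-3) this] show ?thesis by (simp only: ordprod_def map_map)
qed

lemma foldr_finprod:
  assumes H: "comm_monoid H" and d: "distinct xs" and xs: "a ` set xs \<subseteq> carrier H"
  shows "foldr (\<lambda>x y. x \<otimes>\<^bsub>H\<^esub> y) (map a xs) \<one>\<^bsub>H\<^esub> = finprod H a (set xs)"
  using d xs
proof (induction xs)
  case Nil then show ?case using H by (simp add: comm_monoid.finprod_empty)
next
  case (Cons x xs) then show ?case using H by (simp add: comm_monoid.finprod_insert Pi_iff image_subset_iff)
qed

lemma ordprod_finprod:
  assumes H: "comm_monoid H" and a: "a ` {1..n} \<subseteq> carrier H"
  shows "ordprod H a n = finprod H a {1..n}"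
proof -
  have s: "set [1..<Suc n] = {1..n}" by auto
  show ?thesis unfolding ordprod_def using foldr_finprod[OF H, of "[1..<Suc n]" a] a s by simp
qed

lemma finprod_integer_group:
  "finite A \<Longrightarrow> finprod integer_group f A = sum f A"
proof (induction A rule: finite_induct)
  case empty then show ?case
    using abelian_integer_group comm_group.axioms(1) comm_monoid.finprod_empty by fastforce
next
  case (insert x A)
  interpret comm_group integer_group by (rule abelian_integer_group)
  show ?case using insert by simp
qed

lemma hom_finprod_int:
  assumes Q: "comm_group Q" and h: "h \<in> hom Q integer_group" and A: "finite A"
    and f: "f \<in> A \<rightarrow> carrier Q"
  shows "h (finprod Q f A) = (\<Sum>x\<in>A. h (f x))"
  using A f
proof (induction A rule: finite_induct)
  case empty
  interpret comm_group Q by fact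
  show ?case using h by (simp add: hom_one)
next
  case (insert x A)
  interpret comm_group Q by fact
  show ?case using insert h by (simp add: hom_mult)
qed

lemma hom_pow_int:
  assumes Q: "group Q" and h: "h \<in> hom Q integer_group" and x: "x \<in> carrier Q"
  shows "h (x [^]\<^bsub>Q\<^esub> (k::int)) = k * h x"
  using hom_int_pow[OF h x Q group_integer_group] by simp

lemma hom_into_product:
  assumes f: "\<And>i. i \<in> I \<Longrightarrow> f i \<in> hom G (Gs i)"
  shows "(\<lambda>x. \<lambda>i\<in>I. f i x) \<in> hom G (product_group I Gs)"
  using f by (auto simp: hom_def PiE_iff Pi_iff)

definition emb :: "'i set \<Rightarrow> ('i \<Rightarrow> ('b, 'c) monoid_scheme) \<Rightarrow> 'i \<Rightarrow> 'b \<Rightarrow> ('i \<Rightarrow> 'b)" where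
  "emb I Gs i y = (\<lambda>k\<in>I. if k = i then y else \<one>\<^bsub>Gs k\<^esub>)"

lemma emb_hom:
  assumes gr: "\<And>k. k \<in> I \<Longrightarrow> group (Gs k)" and i: "i \<in> I"
  shows "emb I Gs i \<in> hom (Gs i) (product_group I Gs)"
proof (rule homI)
  fix y assume y: "y \<in> carrier (Gs i)"
  show "emb I Gs i y \<in> carrier (product_group I Gs)"
    unfolding carrier_product_group
  proof (rule PiE_I)
    fix k assume k: "k \<in> I"
    show "emb I Gs i y k \<in> carrier (Gs k)"
      using y k gr[OF k] by (simp add: emb_def group.is_monoid monoid.one_closed)
  qed (simp add: emb_def)
next
  fix x y assume x: "x \<in> carrier (Gs i)" and y: "y \<in> carrier (Gs i)"
  show "emb I Gs i (x \<otimes>\<^bsub>Gs i\<^esub> y) = emb I Gs i x \<otimes>\<^bsub>product_group I Gs\<^esub> emb I Gs i y"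
    unfolding mult_product_group emb_def[of I Gs i "x \<otimes>\<^bsub>Gs i\<^esub> y"]
  proof (rule restrict_ext)
    fix k assume k: "k \<in> I"
    have m: "monoid (Gs k)" using gr[OF k] group.is_monoid by blast
    show "(if k = i then x \<otimes>\<^bsub>Gs i\<^esub> y else \<one>\<^bsub>Gs k\<^esub>) = emb I Gs i x k \<otimes>\<^bsub>Gs k\<^esub> emb I Gs i y k"
      using k m by (simp add: emb_def monoid.l_one monoid.one_closed)
  qed
qed

lemma product_decomp:
  assumes I: "finite I" and gr: "\<And>k. k \<in> I \<Longrightarrow> group (Gs k)" and K: "comm_group K"
    and phi: "phi \<in> hom (product_group I Gs) K" and y: "y \<in> carrier (product_group I Gs)"
  shows "phi y = finprod K (\<lambda>i. phi (emb I Gs i (y i))) I"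
proof -
  interpret K: comm_group K by fact
  have PG: "group (product_group I Gs)" using gr by simp
  have main: "\<forall>y \<in> carrier (product_group I Gs). (\<forall>i\<in>I - J. y i = \<one>\<^bsub>Gs i\<^esub>) \<longrightarrow>
      phi y = finprod K (\<lambda>i. phi (emb I Gs i (y i))) J" if J: "finite J" "J \<subseteq> I" for J
    using J
  proof (induction J rule: finite_induct)
    case empty
    show ?case
    proof (intro ballI impI)
      fix y assume y: "y \<in> carrier (product_group I Gs)" "\<forall>i\<in>I - {}. y i = \<one>\<^bsub>Gs i\<^esub>"
      then have "y = \<one>\<^bsub>product_group I Gs\<^esub>" by (auto simp: PiE_iff fun_eq_iff extensional_def)
      then show "phi y = finprod K (\<lambda>i. phi (emb I Gs i (y i))) {}"
        using hom_one[OF phi PG K.is_group] by simp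
    qed
  next
    case (insert j J)
    show ?case
    proof (intro ballI impI)
      fix y assume y: "y \<in> carrier (product_group I Gs)" "\<forall>i\<in>I - insert j J. y i = \<one>\<^bsub>Gs i\<^esub>"
      have jI: "j \<in> I" using insert by auto
      define y' where "y' = (\<lambda>k\<in>I. if k = j then \<one>\<^bsub>Gs k\<^esub> else y k)"
      have y'c: "y' \<in> carrier (product_group I Gs)" using y gr by (auto simp: y'_def PiE_iff group.is_monoid)
      have y'1: "\<forall>i\<in>I - J. y' i = \<one>\<^bsub>Gs i\<^esub>" using y by (auto simp: y'_def)
      have ejc: "emb I Gs j (y j) \<in> carrier (product_group I Gs)"
        using hom_in_carrier[OF emb_hom[of I Gs j, OF gr jI], of "y j"] y jI by (auto simp: PiE_iff)
      have carr: "phi (emb I Gs i (y i)) \<in> carrier K" if "i \<in> I" for i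
        using hom_in_carrier[OF phi hom_in_carrier[OF emb_hom[of I Gs i, OF gr that], of "y i"]] y that
        by (auto simp: PiE_iff)
      have dec: "y = emb I Gs j (y j) \<otimes>\<^bsub>product_group I Gs\<^esub> y'"
        using y gr jI by (auto simp: y'_def emb_def fun_eq_iff PiE_iff group.is_monoid extensional_def)
      have "phi y = phi (emb I Gs j (y j)) \<otimes>\<^bsub>K\<^esub> phi y'"
        using hom_mult[OF phi ejc y'c] dec by simp
      also have "phi y' = finprod K (\<lambda>i. phi (emb I Gs i (y' i))) J"
        using insert y'c y'1 by auto
      also have "\<dots> = finprod K (\<lambda>i. phi (emb I Gs i (y i))) J"
        using insert carr by (intro K.finprod_cong') (auto simp: y'_def)
      also have "phi (emb I Gs j (y j)) \<otimes>\<^bsub>K\<^esub> \<dots> = finprod K (\<lambda>i. phi (emb I Gs i (y i))) (insert j J)"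
        using insert carr by (subst K.finprod_insert) auto
      finally show "phi y = finprod K (\<lambda>i. phi (emb I Gs i (y i))) (insert j J)" .
    qed
  qed
  show ?thesis using main[OF I order_refl] y by auto
qed

lemma sum_hom_product:
  assumes om: "\<And>i. i \<in> I \<Longrightarrow> om i \<in> hom (Gs i) integer_group"
  shows "(\<lambda>y. \<Sum>i\<in>I. om i (y i)) \<in> hom (product_group I Gs) integer_group"
proof (rule homI)
  fix x y assume x: "x \<in> carrier (product_group I Gs)" and y: "y \<in> carrier (product_group I Gs)"
  have "(\<Sum>i\<in>I. om i ((x \<otimes>\<^bsub>product_group I Gs\<^esub> y) i)) = (\<Sum>i\<in>I. om i (x i) + om i (y i))"
  proof (rule sum.cong)
    fix i assume i: "i \<in> I"
    have "x i \<in> carrier (Gs i)" "y i \<in> carrier (Gs i)" using x y i by (auto simp: PiE_iff)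
    then show "om i ((x \<otimes>\<^bsub>product_group I Gs\<^esub> y) i) = om i (x i) + om i (y i)"
      using i hom_mult[OF om[OF i]] by simp
  qed simp
  then show "(\<Sum>i\<in>I. om i ((x \<otimes>\<^bsub>product_group I Gs\<^esub> y) i)) =
     (\<Sum>i\<in>I. om i (x i)) \<otimes>\<^bsub>integer_group\<^esub> (\<Sum>i\<in>I. om i (y i))"
    by (simp add: sum.distrib)
qed simp



definition fmap :: "('c, 'd) monoid_scheme \<Rightarrow> ('s \<Rightarrow> 'c) \<Rightarrow> 's set \<Rightarrow> ('s \<Rightarrow>\<^sub>0 int) \<Rightarrow> 'c" where
  "fmap Q eps S x = finprod Q (\<lambda>s. eps s [^]\<^bsub>Q\<^esub> Poly_Mapping.lookup x s) S"

lemma fmap_hom: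
  assumes Q: "comm_group Q" and S: "finite S" and eps: "eps ` S \<subseteq> carrier Q"
  shows "fmap Q eps S \<in> hom (free_Abelian_group S) Q"
proof -
  interpret Q: comm_group Q by fact
  show ?thesis
  proof (rule homI)
    fix x assume "x \<in> carrier (free_Abelian_group S)"
    show "fmap Q eps S x \<in> carrier Q" unfolding fmap_def using eps by (auto intro!: Q.finprod_closed)
  next
    fix x y assume "x \<in> carrier (free_Abelian_group S)" "y \<in> carrier (free_Abelian_group S)"
    have "fmap Q eps S (x \<otimes>\<^bsub>free_Abelian_group S\<^esub> y) =
        finprod Q (\<lambda>s. eps s [^]\<^bsub>Q\<^esub> Poly_Mapping.lookup x s \<otimes>\<^bsub>Q\<^esub> eps s [^]\<^bsub>Q\<^esub> Poly_Mapping.lookup y s) S"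
      unfolding fmap_def using eps
      by (intro Q.finprod_cong') (auto simp: lookup_add Q.int_pow_mult)
    also have "\<dots> = fmap Q eps S x \<otimes>\<^bsub>Q\<^esub> fmap Q eps S y"
      unfolding fmap_def using eps by (intro Q.finprod_multf) auto
    finally show "fmap Q eps S (x \<otimes>\<^bsub>free_Abelian_group S\<^esub> y) = fmap Q eps S x \<otimes>\<^bsub>Q\<^esub> fmap Q eps S y" .
  qed
qed

lemma fmap_frag:
  assumes Q: "comm_group Q" and S: "finite S" and eps: "eps ` S \<subseteq> carrier Q" and s: "s \<in> S"
  shows "fmap Q eps S (frag_of s) = eps s"
proof -
  interpret Q: comm_group Q by fact
  have "fmap Q eps S (frag_of s) = finprod Q (\<lambda>j. if s = j then eps j else \<one>\<^bsub>Q\<^esub>) S"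
    unfolding fmap_def using eps by (intro Q.finprod_cong') auto
  also have "\<dots> = eps s" using s S eps by (intro Q.finprod_singleton) auto
  finally show ?thesis .
qed

lemma fmap_zero_imp:
  assumes ab: "abelian_basis Q eps S" and x: "x \<in> carrier (free_Abelian_group S)"
    and z: "fmap Q eps S x = \<one>\<^bsub>Q\<^esub>"
  shows "x = 0"
proof -
  have "\<forall>j\<in>S. Poly_Mapping.lookup x j = 0"
    using ab z unfolding abelian_basis_def fmap_def by blast
  moreover have "\<forall>j. j \<notin> S \<longrightarrow> Poly_Mapping.lookup x j = 0"
    using x by (auto simp: in_keys_iff)
  ultimately show ?thesis by (intro poly_mapping_eqI) auto
qed

lemma gen_sub_image:
  assumes Q: "group Q" and F: "group F" and h: "h \<in> hom F Q"
    and gen: "generate Q A = carrier Q" and A: "A \<subseteq> h ` carrier F"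
  shows "carrier Q \<subseteq> h ` carrier F"
proof -
  interpret gh: group_hom F Q h using F Q h by (simp add: group_hom_def group_hom_axioms_def)
  have "generate Q A \<subseteq> h ` carrier F"
    using A by (intro group.generate_subgroup_incl[OF Q] gh.img_is_subgroup)
  then show ?thesis using gen by simp
qed

lemma basis_iso:
  assumes ab: "abelian_basis Q eps S"
  shows "fmap Q eps S \<in> iso (free_Abelian_group S) Q"
proof -
  have Q: "comm_group Q" and S: "finite S" and eps: "eps ` S \<subseteq> carrier Q"
    and gen: "generate Q (eps ` S) = carrier Q"
    using ab unfolding abelian_basis_def by auto
  have Qg: "group Q" using Q comm_group.axioms(2) by blast
  have h: "fmap Q eps S \<in> hom (free_Abelian_group S) Q" by (rule fmap_hom[OF Q S eps])
  interpret gh: group_hom "free_Abelian_group S" Q "fmap Q eps S"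
    using h Qg by (simp add: group_hom_def group_hom_axioms_def)
  show ?thesis
  proof (subst gh.iso_iff, intro conjI ballI impI)
    have "eps ` S \<subseteq> fmap Q eps S ` carrier (free_Abelian_group S)"
    proof
      fix y assume "y \<in> eps ` S"
      then obtain s where s: "s \<in> S" "y = eps s" by auto
      then show "y \<in> fmap Q eps S ` carrier (free_Abelian_group S)"
        using fmap_frag[OF Q S eps s(1)] by (intro image_eqI[of _ _ "frag_of s"]) auto
    qed
    then show "carrier Q \<subseteq> fmap Q eps S ` carrier (free_Abelian_group S)"
      by (rule gen_sub_image[OF Qg group_free_Abelian_group h gen])
  next
    fix x assume "x \<in> carrier (free_Abelian_group S)" "fmap Q eps S x = \<one>\<^bsub>Q\<^esub>"
    then show "x = \<one>\<^bsub>free_Abelian_group S\<^esub>" using fmap_zero_imp[OF ab] by simp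
  qed
qed

lemma basis_hom_int:
  assumes G: "group G" and ab: "abelian_basis (abelianization G) (\<lambda>j. ab_class G (a j)) J"
    and ac: "a ` J \<subseteq> carrier G"
  shows "\<exists>g \<in> hom G integer_group. \<forall>j\<in>J. g (a j) = v j"
proof -
  let ?Q = "abelianization G"
  let ?eps = "\<lambda>j. ab_class G (a j)"
  have Q: "comm_group ?Q" and S: "finite J" and eps: "?eps ` J \<subseteq> carrier ?Q"
    using ab unfolding abelian_basis_def by auto
  have iso: "fmap ?Q ?eps J \<in> iso (free_Abelian_group J) ?Q" by (rule basis_iso[OF ab])
  define Inv where "Inv = inv_into (carrier (free_Abelian_group J)) (fmap ?Q ?eps J)"
  have Inv: "Inv \<in> iso ?Q (free_Abelian_group J)"
    unfolding Inv_def by (rule group.iso_set_sym[OF group_free_Abelian_group iso])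
  have V: "fmap integer_group v J \<in> hom (free_Abelian_group J) integer_group"
    by (rule fmap_hom[OF abelian_integer_group S]) simp
  define g where "g = fmap integer_group v J \<circ> Inv \<circ> ab_class G"
  have "g \<in> hom G integer_group"
    unfolding g_def using ab_facts(2)[OF G] Inv V
    by (intro hom_compose) (auto simp: iso_iff)
  moreover have "g (a j) = v j" if j: "j \<in> J" for j
  proof -
    have "Inv (ab_class G (a j)) = frag_of j"
      unfolding Inv_def fmap_frag[OF Q S eps j, symmetric]
      by (rule inv_into_f_f) (use iso j in \<open>auto simp: iso_iff\<close>)
    then show ?thesis unfolding g_def using fmap_frag[OF abelian_integer_group S _ j, of v] by simp
  qed
  ultimately show ?thesis by blast
qed



lemma quot_hom_ex:
  assumes G: "group G" and N: "N \<lhd> G" and f: "f \<in> hom G H" and H: "group H"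
    and kill: "\<And>x. x \<in> N \<Longrightarrow> f x = \<one>\<^bsub>H\<^esub>"
  shows "\<exists>g. g \<in> hom (G Mod N) H \<and> (\<forall>x\<in>carrier G. g (N #>\<^bsub>G\<^esub> x) = f x)"
proof -
  obtain g where "g \<in> hom (G Mod N) H" "\<And>x. x \<in> carrier G \<Longrightarrow> g (N #>\<^bsub>G\<^esub> x) = f x"
    using quot_hom[OF assms] by blast
  then show ?thesis by blast
qed

lemma foldr_closed:
  assumes "monoid G" "set xs \<subseteq> carrier G"
  shows "foldr (\<lambda>x y. x \<otimes>\<^bsub>G\<^esub> y) xs \<one>\<^bsub>G\<^esub> \<in> carrier G"
  using assms(2) by (induction xs) (auto simp: assms(1) monoid.m_closed monoid.one_closed)

lemma ordprod_closed:
  assumes "monoid G" "a ` {1..n} \<subseteq> carrier G"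
  shows "ordprod G a n \<in> carrier G"
  unfolding ordprod_def using assms by (intro foldr_closed) auto

lemma generate_kill:
  assumes G: "group G" and H: "group H" and f: "f \<in> hom G H" and A: "A \<subseteq> carrier G"
    and k: "\<And>x. x \<in> A \<Longrightarrow> f x = \<one>\<^bsub>H\<^esub>" and y: "y \<in> generate G A"
  shows "f y = \<one>\<^bsub>H\<^esub>"
proof -
  interpret gh: group_hom G H f using G H f by (simp add: group_hom_def group_hom_axioms_def)
  have "generate G A \<subseteq> kernel G H f"
    using A k by (intro group.generate_subgroup_incl[OF G _ gh.subgroup_kernel]) (auto simp: kernel_def)
  then show ?thesis using y by (auto simp: kernel_def)
qed

lemma finprod_subgroup:
  assumes Q: "comm_group Q" and M: "subgroup M Q" and A: "finite A" and f: "f \<in> A \<rightarrow> M"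
  shows "finprod Q f A \<in> M"
  using A f
proof (induction A rule: finite_induct)
  case empty
  interpret comm_group Q by fact
  show ?case using M by (simp add: subgroup.one_closed)
next
  case (insert x A)
  interpret comm_group Q by fact
  have "f \<in> A \<rightarrow> carrier Q" "f x \<in> carrier Q" using insert M subgroup.subset by blast+
  then show ?case using insert M by (simp add: subgroup.m_closed)
qed

lemma finprod_int_pow:
  assumes Q: "comm_group Q" and f: "f \<in> A \<rightarrow> carrier Q"
  shows "finprod Q (\<lambda>x. f x [^]\<^bsub>Q\<^esub> (k::int)) A = finprod Q f A [^]\<^bsub>Q\<^esub> k"
proof (cases "finite A")
  case False
  interpret comm_group Q by fact
  show ?thesis using False by simp
next
  case True
  then show ?thesis using f
  proof (induction A rule: finite_induct)
    case empty
    interpret comm_group Q by fact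
    show ?case by simp
  next
    case (insert x A)
    interpret comm_group Q by fact
    have "f \<in> A \<rightarrow> carrier Q" "f x \<in> carrier Q" using insert by auto
    then show ?case using insert by (simp add: int_pow_distrib Pi_iff)
  qed
qed

lemma hom_finprod_comm:
  assumes K: "comm_group K" and Q: "comm_group Q" and h: "h \<in> hom K Q" and f: "f \<in> A \<rightarrow> carrier K"
  shows "h (finprod K f A) = finprod Q (\<lambda>x. h (f x)) A"
proof (cases "finite A")
  case False
  interpret K: comm_group K by fact
  interpret Q: comm_group Q by fact
  show ?thesis using False h by (simp add: hom_one)
next
  case True
  then show ?thesis using f
  proof (induction A rule: finite_induct)
    case empty
    interpret K: comm_group K by fact
    interpret Q: comm_group Q by fact
    show ?case using h by (simp add: hom_one)
  next
    case (insert x A)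
    interpret K: comm_group K by fact
    interpret Q: comm_group Q by fact
    have "f \<in> A \<rightarrow> carrier K" "f x \<in> carrier K" using insert by auto
    then show ?case using insert h
      by (simp add: hom_mult Pi_iff hom_in_carrier)
  qed
qed

definition ev :: "('c, 'd) monoid_scheme \<Rightarrow> ('e \<Rightarrow> 'c) \<Rightarrow> 'e set \<Rightarrow> ('e \<Rightarrow> int) \<Rightarrow> 'c" where
  "ev Q eps E v = finprod Q (\<lambda>f. eps f [^]\<^bsub>Q\<^esub> v f) E"

lemma ev_add:
  assumes Q: "comm_group Q" and eps: "eps ` E \<subseteq> carrier Q"
  shows "ev Q eps E (\<lambda>f. u f + v f) = ev Q eps E u \<otimes>\<^bsub>Q\<^esub> ev Q eps E v"
proof -
  interpret comm_group Q by fact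
  have "ev Q eps E (\<lambda>f. u f + v f) = finprod Q (\<lambda>f. eps f [^]\<^bsub>Q\<^esub> u f \<otimes>\<^bsub>Q\<^esub> eps f [^]\<^bsub>Q\<^esub> v f) E"
    unfolding ev_def using eps by (intro finprod_cong') (auto simp: int_pow_mult)
  also have "\<dots> = ev Q eps E u \<otimes>\<^bsub>Q\<^esub> ev Q eps E v"
    unfolding ev_def using eps by (intro finprod_multf) auto
  finally show ?thesis .
qed

lemma ev_closed:
  assumes Q: "comm_group Q" and eps: "eps ` E \<subseteq> carrier Q"
  shows "ev Q eps E v \<in> carrier Q"
proof -
  interpret comm_group Q by fact
  show ?thesis unfolding ev_def using eps by (intro finprod_closed) auto
qed

lemma ev_cong:
  assumes Q: "comm_group Q" and eps: "eps ` E \<subseteq> carrier Q" and uv: "\<And>f. f \<in> E \<Longrightarrow> u f = v f"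
  shows "ev Q eps E u = ev Q eps E v"
proof -
  interpret comm_group Q by fact
  show ?thesis unfolding ev_def using eps uv by (intro finprod_cong') auto
qed

lemma ev_delta:
  assumes Q: "comm_group Q" and eps: "eps ` E \<subseteq> carrier Q" and E: "finite E" and e: "e \<in> E"
  shows "ev Q eps E (\<lambda>f. if f = e then 1 else 0) = eps e"
proof -
  interpret comm_group Q by fact
  have "ev Q eps E (\<lambda>f. if f = e then 1 else 0) = finprod Q (\<lambda>f. if e = f then eps f else \<one>\<^bsub>Q\<^esub>) E"
    unfolding ev_def using eps by (intro finprod_cong') auto
  also have "\<dots> = eps e" using e E eps by (intro finprod_singleton) auto
  finally show ?thesis .
qed

lemma ev_neg:
  assumes Q: "comm_group Q" and eps: "eps ` E \<subseteq> carrier Q"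
  shows "ev Q eps E (\<lambda>f. - v f) = inv\<^bsub>Q\<^esub> (ev Q eps E v)"
proof -
  interpret comm_group Q by fact
  have "ev Q eps E (\<lambda>f. - v f) \<otimes>\<^bsub>Q\<^esub> ev Q eps E v = ev Q eps E (\<lambda>f. 0)"
    using ev_add[OF Q eps, of "\<lambda>f. - v f" v] by simp
  also have "\<dots> = \<one>\<^bsub>Q\<^esub>" unfolding ev_def by simp
  finally show ?thesis using ev_closed[OF Q eps] by (metis inv_equality)
qed

lemma ev_fiber:
  assumes Q: "comm_group Q" and eps: "eps ` E \<subseteq> carrier Q" and E: "finite E"
    and fib: "\<And>u. u \<in> t ` E \<Longrightarrow> finprod Q eps {f\<in>E. t f = u} = \<one>\<^bsub>Q\<^esub>"
  shows "ev Q eps E (\<lambda>f. k (t f)) = \<one>\<^bsub>Q\<^esub>"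
proof -
  interpret comm_group Q by fact
  have Eeq: "E = (\<Union>u\<in>t ` E. {f\<in>E. t f = u})" by auto
  have "ev Q eps E (\<lambda>f. k (t f)) = finprod Q (\<lambda>f. eps f [^]\<^bsub>Q\<^esub> k (t f)) (\<Union>u\<in>t ` E. {f\<in>E. t f = u})"
    unfolding ev_def by (subst Eeq) simp
  also have "\<dots> = finprod Q (\<lambda>u. finprod Q (\<lambda>f. eps f [^]\<^bsub>Q\<^esub> k (t f)) {f\<in>E. t f = u}) (t ` E)"
    using E eps by (intro finprod_UN_disjoint) (auto simp: pairwise_def disjnt_def)
  also have "\<dots> = finprod Q (\<lambda>u. \<one>\<^bsub>Q\<^esub>) (t ` E)"
  proof (intro finprod_cong')
    fix u assume u: "u \<in> t ` E"
    have "finprod Q (\<lambda>f. eps f [^]\<^bsub>Q\<^esub> k (t f)) {f\<in>E. t f = u} = finprod Q (\<lambda>f. eps f [^]\<^bsub>Q\<^esub> k u) {f\<in>E. t f = u}"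
      using eps by (intro finprod_cong') auto
    also have "\<dots> = finprod Q eps {f\<in>E. t f = u} [^]\<^bsub>Q\<^esub> k u"
      using eps by (intro finprod_int_pow[OF Q]) auto
    also have "\<dots> = \<one>\<^bsub>Q\<^esub>" using fib[OF u] by simp
    finally show "finprod Q (\<lambda>f. eps f [^]\<^bsub>Q\<^esub> k (t f)) {f\<in>E. t f = u} = \<one>\<^bsub>Q\<^esub>" .
  qed auto
  also have "\<dots> = \<one>\<^bsub>Q\<^esub>" by simp
  finally show ?thesis .
qed



theorem mainTheorem14:
  fixes G :: "('a, 'b) monoid_scheme" and a :: "nat \<Rightarrow> 'a" and n m :: nat
    and S :: "nat \<Rightarrow> nat set"
  assumes grp: "group G"
    and a_carr: "a ` {1..n} \<subseteq> carrier G"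
    and a_gen: "generate G (a ` {1..n}) = carrier G"
    and z_central: "\<forall>g\<in>carrier G. ordprod G a n \<otimes>\<^bsub>G\<^esub> g = g \<otimes>\<^bsub>G\<^esub> ordprod G a n"
    and S_sub: "\<forall>i\<in>{1..m}. S i \<subseteq> {1..n}"
    and S_int: "\<forall>i\<in>{1..m}. \<forall>r\<in>{1..m}. i \<noteq> r \<longrightarrow> card (S i \<inter> S r) \<le> 1"
    and barGS_free: "\<forall>i\<in>{1..m}. free_group_of_rank (barGS G a n (S i)) (card (S i) - 1)"
    and barGS_basis: "\<forall>i\<in>{1..m}. \<forall>T. T \<subseteq> S i \<and> card T = card (S i) - 1 \<longrightarrow>
           free_basis (barGS G a n (S i)) (\<lambda>j. barprojS G a n (S i) (projS G a n (S i) (a j))) T"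
    and G_ab: "abelian_basis (abelianization G) (\<lambda>j. ab_class G (a j)) {1..n}"
    and A_ab: "abelian_basis (abelianization (Aprod G a n S m))
           (\<lambda>ij. ab_class (Aprod G a n S m) (aA G a n S m ij))
           {(i, j). i \<in> {1..m} \<and> j \<in> S i}"
  shows "free_abelian
           (cokernel (abelianization (barG G a n)) (abelianization (barAprod G a n S m))
              (rho_bar_ab G a n S m))"
proof -
  interpret G: group G by (rule grp)
  define z where "z = ordprod G a n"
  have zc: "z \<in> carrier G" unfolding z_def using a_carr by (intro ordprod_closed) auto
  define Nc where "Nc i = normal_closure G (a ` ({1..n} - S i))" for i
  define GSi where "GSi i = GS G a n (S i)" for i
  define P where "P i = projS G a n (S i)" for i
  have GSi_eq: "GSi i = G Mod Nc i" for i by (simp add: GSi_def GS_def Nc_def)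
  have P_eq: "P i x = Nc i #>\<^bsub>G\<^esub> x" for i x by (simp add: P_def projS_def Nc_def)
  have Nc_sub: "a ` ({1..n} - S i) \<subseteq> carrier G" for i using a_carr by auto
  have Nc_normal: "Nc i \<lhd> G" for i unfolding Nc_def by (rule normal_closure_facts(1)[OF grp Nc_sub])
  have Nc_incl: "a j \<in> Nc i" if "j \<in> {1..n}" "j \<notin> S i" for i j
  proof -
    have "a j \<in> a ` ({1..n} - S i)" using that by blast
    then show ?thesis using normal_closure_facts(2)[OF grp Nc_sub[of i]] unfolding Nc_def by blast
  qed
  have GSi_grp: "group (GSi i)" for i unfolding GSi_eq using Nc_normal normal.factorgroup_is_group by blast
  have P_hom: "P i \<in> hom G (GSi i)" for i
  proof -
    have "(\<lambda>x. Nc i #>\<^bsub>G\<^esub> x) \<in> hom G (G Mod Nc i)" using normal.r_coset_hom_Mod[OF Nc_normal] .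
    then show ?thesis unfolding GSi_eq P_eq[abs_def] by simp
  qed
  have P_surj: "carrier (GSi i) = P i ` carrier G" for i
    unfolding GSi_eq P_eq[abs_def] carrier_FactGroup by simp
  define zs where "zs i = zS G a n (S i)" for i
  have zs_eq: "zs i = P i z" for i
  proof -
    have "P i z = ordprod (GSi i) (P i \<circ> a) n"
      unfolding z_def by (rule ordprod_hom[OF P_hom grp GSi_grp a_carr])
    then show ?thesis by (simp add: zs_def zS_def GSi_def P_def o_def)
  qed
  have zs_c: "zs i \<in> carrier (GSi i)" for i unfolding zs_eq using P_hom zc by (rule hom_in_carrier)
  have zs_central: "\<forall>g\<in>carrier (GSi i). zs i \<otimes>\<^bsub>GSi i\<^esub> g = g \<otimes>\<^bsub>GSi i\<^esub> zs i" for i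
  proof
    fix g assume "g \<in> carrier (GSi i)"
    then obtain x where x: "x \<in> carrier G" "g = P i x" using P_surj by auto
    have "zs i \<otimes>\<^bsub>GSi i\<^esub> g = P i (z \<otimes>\<^bsub>G\<^esub> x)" using x zc hom_mult[OF P_hom zc x(1)] by (simp add: zs_eq)
    also have "\<dots> = P i (x \<otimes>\<^bsub>G\<^esub> z)" using z_central x by (simp add: z_def)
    also have "\<dots> = g \<otimes>\<^bsub>GSi i\<^esub> zs i" using x zc hom_mult[OF P_hom x(1) zc] by (simp add: zs_eq)
    finally show "zs i \<otimes>\<^bsub>GSi i\<^esub> g = g \<otimes>\<^bsub>GSi i\<^esub> zs i" .
  qed
  define Zi where "Zi i = generate (GSi i) {zs i}" for i
  have Zi_normal: "Zi i \<lhd> GSi i" for i unfolding Zi_def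
    by (rule central_generate_normal[OF GSi_grp zs_c zs_central])
  define BG where "BG i = barGS G a n (S i)" for i
  define bp where "bp i = barprojS G a n (S i)" for i
  have BG_eq: "BG i = GSi i Mod Zi i" for i by (simp add: BG_def barGS_def Zi_def GSi_def zs_def)
  have bp_eq: "bp i y = Zi i #>\<^bsub>GSi i\<^esub> y" for i y by (simp add: bp_def barprojS_def Zi_def GSi_def zs_def)
  have BG_grp: "group (BG i)" for i unfolding BG_eq using Zi_normal normal.factorgroup_is_group by blast
  have bp_hom: "bp i \<in> hom (GSi i) (BG i)" for i
  proof -
    have "(\<lambda>x. Zi i #>\<^bsub>GSi i\<^esub> x) \<in> hom (GSi i) (GSi i Mod Zi i)" using normal.r_coset_hom_Mod[OF Zi_normal] .
    then show ?thesis unfolding BG_eq bp_eq[abs_def] by simp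
  qed
  have bp_surj: "carrier (BG i) = bp i ` carrier (GSi i)" for i
    unfolding BG_eq bp_eq[abs_def] carrier_FactGroup by simp
  have bp_zs: "bp i (zs i) = \<one>\<^bsub>BG i\<^esub>" for i
  proof -
    have "zs i \<in> Zi i" unfolding Zi_def by (rule generate.incl) simp
    then have "Zi i #>\<^bsub>GSi i\<^esub> zs i = Zi i"
      by (rule subgroup.rcos_const[OF normal_imp_subgroup[OF Zi_normal] GSi_grp])
    then show ?thesis unfolding bp_eq BG_eq by simp
  qed
  define I where "I = {1..m}"
  have Sn: "j \<in> {1..n}" if "i \<in> I" "j \<in> S i" for i j
    using S_sub that unfolding I_def by blast
  have SnI: "S i \<subseteq> {1..n}" if "i \<in> I" for i
    using S_sub that unfolding I_def by blast
  define barA where "barA = product_group I BG"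
  have barA_eq: "barAprod G a n S m = barA" by (simp add: barAprod_def barA_def I_def BG_def[abs_def])
  have barA_grp: "group barA" unfolding barA_def using BG_grp by simp
  define K where "K = abelianization barA"
  define cls where "cls = ab_class barA"
  have K_comm: "comm_group K" and cls_hom: "cls \<in> hom barA K"
    unfolding K_def cls_def using ab_facts[OF barA_grp] by auto
  have K_grp: "group K" using K_comm comm_group.axioms(2) by blast
  have K_carr: "carrier K = cls ` carrier barA"
    unfolding K_def cls_def abelianization_def ab_class_def[abs_def] carrier_FactGroup by simp
  define Rx where "Rx x = (\<lambda>i\<in>I. bp i (P i x))" for x
  have Rx_hom: "Rx \<in> hom G barA"
    unfolding Rx_def[abs_def] barA_def
    by (rule hom_into_product) (rule hom_compose[OF P_hom bp_hom, unfolded o_def])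
  define psi where "psi = cls \<circ> Rx"
  have psi_hom: "psi \<in> hom G K" unfolding psi_def by (rule hom_compose[OF Rx_hom cls_hom])
  have Rx_z: "Rx z = \<one>\<^bsub>barA\<^esub>"
    unfolding Rx_def barA_def one_product_group using bp_zs by (simp add: zs_eq[symmetric])
  have psi_z: "psi z = \<one>\<^bsub>K\<^esub>"
    unfolding psi_def using Rx_z hom_one[OF cls_hom barA_grp K_grp] by simp
  define Zg where "Zg = generate G {z}"
  have Zg_normal: "Zg \<lhd> G" unfolding Zg_def
    by (rule central_generate_normal[OF grp zc]) (use z_central in \<open>simp add: z_def\<close>)
  define Gb where "Gb = barG G a n"
  have Gb_eq: "Gb = G Mod Zg" by (simp add: Gb_def barG_def Zg_def z_def)
  have Gb_grp: "group Gb" unfolding Gb_eq using Zg_normal normal.factorgroup_is_group by blast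
  have Gb_carr: "carrier Gb = (\<lambda>x. Zg #>\<^bsub>G\<^esub> x) ` carrier G" unfolding Gb_eq carrier_FactGroup ..
  have psi_Zg: "psi x = \<one>\<^bsub>K\<^esub>" if "x \<in> Zg" for x
    using generate_kill[OF grp K_grp psi_hom _ _ that[unfolded Zg_def]] zc psi_z by auto
  obtain psi1 where psi1: "psi1 \<in> hom Gb K" "\<And>x. x \<in> carrier G \<Longrightarrow> psi1 (Zg #>\<^bsub>G\<^esub> x) = psi x"
    using quot_hom[OF grp Zg_normal psi_hom K_grp psi_Zg] unfolding Gb_eq by blast
  obtain psi2 where psi2: "psi2 \<in> hom (abelianization Gb) K"
      "\<And>C. C \<in> carrier Gb \<Longrightarrow> psi2 (ab_class Gb C) = psi1 C"
    using ab_desc[OF Gb_grp K_comm psi1(1)] by blast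
  have rho_eq: "rho_bar_ab G a n S m D = psi2 D" if D: "D \<in> carrier (abelianization Gb)" for D
  proof -
    interpret Gb: group Gb by (rule Gb_grp)
    define der where "der = derived Gb (carrier Gb)"
    have der_sub: "subgroup der Gb" unfolding der_def by (rule Gb.derived_is_subgroup) simp
    have "D \<in> (\<lambda>C. der #>\<^bsub>Gb\<^esub> C) ` carrier Gb"
      using D unfolding abelianization_def der_def carrier_FactGroup .
    then obtain C0 where C0: "C0 \<in> carrier Gb" "D = der #>\<^bsub>Gb\<^esub> C0" by auto
    have "C0 \<in> D" using C0 Gb.rcos_self[OF C0(1) der_sub] by simp
    define C where "C = (SOME C. C \<in> D)"
    have CD: "C \<in> D" unfolding C_def using \<open>C0 \<in> D\<close> by (rule someI)
    have Cc: "C \<in> carrier Gb" using CD C0 der_sub Gb.r_coset_subset_G subgroup.subset by blast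
    have D_eq: "D = der #>\<^bsub>Gb\<^esub> C" using Gb.repr_independence[OF _ C0(1) der_sub] CD C0(2) by simp
    obtain x0 where x0: "x0 \<in> carrier G" "C = Zg #>\<^bsub>G\<^esub> x0" using Cc Gb_carr by auto
    have Zg_sub: "subgroup Zg G" using Zg_normal normal_imp_subgroup by blast
    have "x0 \<in> C" using x0 G.rcos_self[OF x0(1) Zg_sub] by simp
    define x where "x = (SOME x. x \<in> C)"
    have xC: "x \<in> C" unfolding x_def using \<open>x0 \<in> C\<close> by (rule someI)
    have xc: "x \<in> carrier G" using xC x0 Zg_sub G.r_coset_subset_G subgroup.subset by blast
    have C_eq: "C = Zg #>\<^bsub>G\<^esub> x" using G.repr_independence[OF _ x0(1) Zg_sub] xC x0(2) by simp
    have "rho_bar_ab G a n S m D = cls (Rx x)"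
      by (simp add: rho_bar_ab_def rho_bar_def barA_eq cls_def Rx_def I_def bp_def P_def
          flip: C_def x_def)
    also have "\<dots> = psi2 (ab_class Gb C)"
      using psi2(2)[OF Cc] psi1(2)[OF xc] by (simp add: C_eq psi_def)
    also have "ab_class Gb C = D" unfolding ab_class_def D_eq der_def ..
    finally show ?thesis .
  qed
  define N where "N = rho_bar_ab G a n S m ` carrier (abelianization Gb)"
  have N_eq: "N = psi ` carrier G"
  proof -
    have "N = psi2 ` carrier (abelianization Gb)" unfolding N_def using rho_eq by auto
    also have "carrier (abelianization Gb) = ab_class Gb ` carrier Gb"
      unfolding abelianization_def ab_class_def[abs_def] carrier_FactGroup ..
    finally have "N = psi2 ` ab_class Gb ` (\<lambda>x. Zg #>\<^bsub>G\<^esub> x) ` carrier G" using Gb_carr by simp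
    also have "\<dots> = psi ` carrier G"
    proof -
      have "\<And>x. x \<in> carrier G \<Longrightarrow> psi2 (ab_class Gb (Zg #>\<^bsub>G\<^esub> x)) = psi x"
        using psi2(2) psi1(2) Gb_carr by auto
      then show ?thesis by (auto simp: image_image image_iff)
    qed
    finally show ?thesis .
  qed
  have N_sub: "subgroup N K"
  proof -
    interpret gh: group_hom G K psi using grp K_grp psi_hom by (simp add: group_hom_def group_hom_axioms_def)
    show ?thesis unfolding N_eq by (rule gh.img_is_subgroup)
  qed
  define Q where "Q = K Mod N"
  have coker_eq: "cokernel (abelianization (barG G a n)) (abelianization (barAprod G a n S m))
              (rho_bar_ab G a n S m) = Q"
    by (simp add: cokernel_def Q_def K_def barA_eq N_def Gb_def)
  have Q_comm: "comm_group Q" unfolding Q_def by (rule comm_group.abelian_FactGroup[OF K_comm N_sub])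
  have Q_grp: "group Q" using Q_comm comm_group.axioms(2) by blast
  have N_normal: "N \<lhd> K" using N_sub comm_group.normal_iff_subgroup[OF K_comm] by blast
  define nu where "nu k = N #>\<^bsub>K\<^esub> k" for k
  have nu_hom: "nu \<in> hom K Q" unfolding Q_def nu_def[abs_def] by (rule normal.r_coset_hom_Mod[OF N_normal])
  have nu_N: "nu k = \<one>\<^bsub>Q\<^esub>" if "k \<in> N" for k
    using subgroup.rcos_const[OF N_sub K_grp that] by (simp add: nu_def Q_def)
  have Q_carr: "carrier Q = nu ` carrier K" unfolding Q_def nu_def[abs_def] carrier_FactGroup ..
  define lam where "lam i = cls \<circ> emb I BG i \<circ> bp i \<circ> P i" for i
  have emb_h: "emb I BG i \<in> hom (BG i) barA" if "i \<in> I" for i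
    unfolding barA_def by (rule emb_hom[OF BG_grp that])
  have lam_hom: "lam i \<in> hom G K" if "i \<in> I" for i
    unfolding lam_def
    by (rule hom_compose[OF P_hom hom_compose[OF bp_hom hom_compose[OF emb_h[OF that] cls_hom]]])
  define eps where "eps = (\<lambda>(i, j). nu (lam i (a j)))"
  have R0: "lam i (a j) = \<one>\<^bsub>K\<^esub>" if i: "i \<in> I" and j: "j \<in> {1..n}" "j \<notin> S i" for i j
  proof -
    have "P i (a j) = Nc i" unfolding P_eq
      using subgroup.rcos_const[OF normal_imp_subgroup[OF Nc_normal] grp Nc_incl[OF j]] .
    also have "\<dots> = \<one>\<^bsub>GSi i\<^esub>" unfolding GSi_eq by simp
    finally have "P i (a j) = \<one>\<^bsub>GSi i\<^esub>" .
    then show ?thesis unfolding lam_def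
      using hom_one[OF bp_hom GSi_grp BG_grp] hom_one[OF emb_h[OF i] BG_grp barA_grp]
        hom_one[OF cls_hom barA_grp K_grp] by simp
  qed
  have eps_c: "eps e \<in> carrier Q" if e0: "e \<in> {(i, j). i \<in> I \<and> j \<in> S i}" for e
  proof -
    obtain i j where e: "e = (i, j)" "i \<in> I" "j \<in> S i" using e0 by auto
    then have "j \<in> {1..n}" using Sn by blast
    then show ?thesis unfolding e eps_def using e a_carr
      by (auto intro!: hom_in_carrier[OF nu_hom] hom_in_carrier[OF lam_hom])
  qed
  have R1: "finprod Q (\<lambda>j. eps (i, j)) (S i) = \<one>\<^bsub>Q\<^esub>" if i: "i \<in> I" for i
  proof -
    interpret Q: comm_group Q by (rule Q_comm)
    have nl: "nu \<circ> lam i \<in> hom G Q" by (rule hom_compose[OF lam_hom[OF i] nu_hom])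
    have "(nu \<circ> lam i) z = \<one>\<^bsub>Q\<^esub>"
      unfolding lam_def using bp_zs[of i] zs_eq[of i]
        hom_one[OF emb_h[OF i] BG_grp barA_grp] hom_one[OF cls_hom barA_grp K_grp]
        hom_one[OF nu_hom K_grp Q_grp] by simp
    moreover have "(nu \<circ> lam i) z = ordprod Q ((nu \<circ> lam i) \<circ> a) n"
      unfolding z_def by (rule ordprod_hom[OF nl grp Q_grp a_carr])
    moreover have "\<dots> = finprod Q ((nu \<circ> lam i) \<circ> a) {1..n}"
      using a_carr hom_in_carrier[OF nl] by (intro ordprod_finprod) (auto simp: Q.comm_monoid_axioms)
    moreover have "finprod Q (\<lambda>j. eps (i, j)) (S i) = finprod Q ((nu \<circ> lam i) \<circ> a) {1..n}"
    proof (rule Q.finprod_mono_neutral_cong_left)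
      show "S i \<subseteq> {1..n}" using SnI[OF i] .
      show "((nu \<circ> lam i) \<circ> a) j = \<one>\<^bsub>Q\<^esub>" if "j \<in> {1..n} - S i" for j
        using R0[OF i] that hom_one[OF nu_hom K_grp Q_grp] by simp
      show "eps (i, j) = ((nu \<circ> lam i) \<circ> a) j" if "j \<in> S i" for j by (simp add: eps_def)
      show "(nu \<circ> lam i) \<circ> a \<in> {1..n} \<rightarrow> carrier Q"
        using a_carr hom_in_carrier[OF nl] by auto
    qed simp
    ultimately show ?thesis by simp
  qed
  have R2: "finprod Q (\<lambda>i. eps (i, j)) {i\<in>I. j \<in> S i} = \<one>\<^bsub>Q\<^esub>" if j: "j \<in> {1..n}" for j
  proof -
    interpret Q: comm_group Q by (rule Q_comm)
    interpret K: comm_group K by (rule K_comm)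
    have ajc: "a j \<in> carrier G" using a_carr j by auto
    have "psi (a j) \<in> N" unfolding N_eq using ajc by auto
    then have one: "nu (psi (a j)) = \<one>\<^bsub>Q\<^esub>" by (rule nu_N)
    have Rxc: "Rx (a j) \<in> carrier barA" using hom_in_carrier[OF Rx_hom ajc] .
    have "psi (a j) = finprod K (\<lambda>i. cls (emb I BG i (Rx (a j) i))) I"
      unfolding psi_def o_def
      by (rule product_decomp[OF _ BG_grp K_comm cls_hom[unfolded barA_def] Rxc[unfolded barA_def]])
        (simp add: I_def)
    also have "\<dots> = finprod K (\<lambda>i. lam i (a j)) I"
      using hom_in_carrier[OF lam_hom ajc]
      by (intro K.finprod_cong') (auto simp: lam_def Rx_def)
    finally have "nu (psi (a j)) = finprod Q (\<lambda>i. nu (lam i (a j))) I"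
      using hom_in_carrier[OF lam_hom ajc]
      by (simp add: hom_finprod_comm[OF K_comm Q_comm nu_hom] Pi_iff)
    also have "\<dots> = finprod Q (\<lambda>i. eps (i, j)) {i\<in>I. j \<in> S i}"
    proof (rule Q.finprod_mono_neutral_cong_left[symmetric])
      show "nu (lam i (a j)) = \<one>\<^bsub>Q\<^esub>" if "i \<in> I - {i \<in> I. j \<in> S i}" for i
        using R0[of i j] that j hom_one[OF nu_hom K_grp Q_grp] by simp
      show "(\<lambda>i. nu (lam i (a j))) \<in> I \<rightarrow> carrier Q"
        using hom_in_carrier[OF nu_hom hom_in_carrier[OF lam_hom ajc]] by auto
    qed (auto simp: I_def eps_def)
    finally show ?thesis using one by simp
  qed
  define E where "E = {(i, j). i \<in> I \<and> j \<in> S i}"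
  have E_fin: "finite E"
  proof (rule finite_subset)
    show "E \<subseteq> I \<times> {1..n}" using Sn by (auto simp: E_def)
  qed (simp add: I_def)
  define t where "t = (\<lambda>(i::nat, j::nat). (Inl i :: nat + nat))"
  define hh where "hh = (\<lambda>(i::nat, j::nat). (Inr j :: nat + nat))"
  obtain B c w where B: "B \<subseteq> E"
    and ga: "\<forall>e\<in>E. \<exists>k::nat + nat\<Rightarrow>int. \<forall>f\<in>E.
         (if f = e then 1 else 0) - (if f \<in> B then c e f else 0) = k (t f) - k (hh f)"
    and gb: "\<forall>b\<in>B. \<forall>u. (\<Sum>f\<in>E. w b f * incv t hh u f) = 0"
    and gc: "\<forall>b\<in>B. \<forall>b'\<in>B. w b b' = (if b = b' then 1 else (0::int))"
    using graph_basis[OF E_fin, of t hh] by blast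
  have B_fin: "finite B" using B E_fin finite_subset by blast
  have epsE: "eps ` E \<subseteq> carrier Q" using eps_c by (auto simp: E_def)
  have epsB: "eps ` B \<subseteq> carrier Q" using epsE B by auto
  define Phi where "Phi = fmap Q eps B"
  have Phi_hom: "Phi \<in> hom (free_Abelian_group B) Q" unfolding Phi_def by (rule fmap_hom[OF Q_comm B_fin epsB])
  interpret Phi: group_hom "free_Abelian_group B" Q Phi
    using Phi_hom Q_grp by (simp add: group_hom_def group_hom_axioms_def)
  define M where "M = Phi ` carrier (free_Abelian_group B)"
  have M_sub: "subgroup M Q" unfolding M_def by (rule Phi.img_is_subgroup)
  have epsB_M: "eps b \<in> M" if "b \<in> B" for b
    unfolding M_def Phi_def using fmap_frag[OF Q_comm B_fin epsB that] that
    by (intro image_eqI[of _ _ "frag_of b"]) auto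
  have fibI: "{f\<in>E. t f = Inl i} = (\<lambda>j. (i, j)) ` S i" if "i \<in> I" for i
    using that by (auto simp: E_def t_def)
  have fibJ: "{f\<in>E. hh f = Inr j} = (\<lambda>i. (i, j)) ` {i\<in>I. j \<in> S i}" for j
    by (auto simp: E_def hh_def)
  have stepa: "eps e \<in> M" if e: "e \<in> E" for e
  proof -
    interpret Q: comm_group Q by (rule Q_comm)
    obtain k where k: "\<forall>f\<in>E. (if f = e then 1 else 0) - (if f \<in> B then c e f else 0) = k (t f) - k (hh f)"
      using ga e by blast
    define d where "d f = (if f \<in> B then c e f else 0)" for f
    have t1: "ev Q eps E (\<lambda>f. k (t f)) = \<one>\<^bsub>Q\<^esub>"
    proof (rule ev_fiber[OF Q_comm epsE E_fin, where t=t and k=k])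
      fix u assume "u \<in> t ` E"
      then obtain i j where ij: "i \<in> I" "j \<in> S i" "u = Inl i" by (auto simp: E_def t_def)
      have "finprod Q eps {f\<in>E. t f = u} = finprod Q (\<lambda>j. eps (i, j)) (S i)"
        unfolding ij(3) fibI[OF ij(1)] using epsE fibI[OF ij(1)]
        by (intro Q.finprod_reindex) (auto simp: inj_on_def)
      then show "finprod Q eps {f\<in>E. t f = u} = \<one>\<^bsub>Q\<^esub>" using R1[OF ij(1)] by simp
    qed
    have h1: "ev Q eps E (\<lambda>f. k (hh f)) = \<one>\<^bsub>Q\<^esub>"
    proof (rule ev_fiber[OF Q_comm epsE E_fin, where t=hh and k=k])
      fix u assume "u \<in> hh ` E"
      then obtain i j where ij: "i \<in> I" "j \<in> S i" "u = Inr j" by (auto simp: E_def hh_def)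
      have jn: "j \<in> {1..n}" using ij Sn by blast
      have "finprod Q eps {f\<in>E. hh f = u} = finprod Q (\<lambda>i. eps (i, j)) {i\<in>I. j \<in> S i}"
        unfolding ij(3) fibJ using epsE fibJ[of j]
        by (intro Q.finprod_reindex) (auto simp: inj_on_def)
      then show "finprod Q eps {f\<in>E. hh f = u} = \<one>\<^bsub>Q\<^esub>" using R2[OF jn] by simp
    qed
    have h2: "ev Q eps E (\<lambda>f. - k (hh f)) = \<one>\<^bsub>Q\<^esub>"
      using ev_neg[OF Q_comm epsE, of "\<lambda>f. k (hh f)"] h1 by simp
    have "eps e = ev Q eps E (\<lambda>f. if f = e then 1 else 0)"
      by (rule ev_delta[OF Q_comm epsE E_fin e, symmetric])
    also have "\<dots> = ev Q eps E (\<lambda>f. d f + (k (t f) + - k (hh f)))"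
      using k by (intro ev_cong[OF Q_comm epsE]) (auto simp: d_def algebra_simps)
    also have "\<dots> = ev Q eps E d \<otimes>\<^bsub>Q\<^esub> (ev Q eps E (\<lambda>f. k (t f)) \<otimes>\<^bsub>Q\<^esub> ev Q eps E (\<lambda>f. - k (hh f)))"
      by (simp only: ev_add[OF Q_comm epsE])
    also have "\<dots> = ev Q eps E d"
      using t1 h2 ev_closed[OF Q_comm epsE, of d] by simp
    finally have "eps e = ev Q eps E d" .
    also have "\<dots> \<in> M"
      unfolding ev_def
    proof (rule finprod_subgroup[OF Q_comm M_sub E_fin], rule Pi_I)
      fix f assume f: "f \<in> E"
      show "eps f [^]\<^bsub>Q\<^esub> d f \<in> M"
      proof (cases "f \<in> B")
        case True
        then show ?thesis using group.subgroup_int_pow_closed[OF Q_grp M_sub epsB_M[OF True]] by simp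
      next
        case False
        then show ?thesis by (simp add: d_def subgroup.one_closed[OF M_sub])
      qed
    qed
    finally show ?thesis .
  qed
  have surj: "carrier Q \<subseteq> M"
  proof
    interpret Q: comm_group Q by (rule Q_comm)
    fix y assume "y \<in> carrier Q"
    then obtain kk where kk: "kk \<in> carrier K" "y = nu kk" using Q_carr by auto
    then obtain yy where yy: "yy \<in> carrier barA" "kk = cls yy" using K_carr by auto
    have nc: "nu \<circ> cls \<in> hom barA Q" by (rule hom_compose[OF cls_hom nu_hom])
    have "y = (nu \<circ> cls) yy" using kk yy by simp
    also have "\<dots> = finprod Q (\<lambda>i. (nu \<circ> cls) (emb I BG i (yy i))) I"
      by (rule product_decomp[OF _ BG_grp Q_comm nc[unfolded barA_def] yy(1)[unfolded barA_def]])
        (simp add: I_def)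
    also have "\<dots> \<in> M"
    proof (rule finprod_subgroup[OF Q_comm M_sub], simp add: I_def, rule Pi_I)
      fix i assume i: "i \<in> I"
      have "yy i \<in> carrier (BG i)" using yy(1) i by (auto simp: barA_def PiE_iff)
      then obtain x where x: "x \<in> carrier G" "yy i = bp i (P i x)" using bp_surj P_surj by auto
      have nl: "nu \<circ> lam i \<in> hom G Q" by (rule hom_compose[OF lam_hom[OF i] nu_hom])
      interpret nl: group_hom G Q "nu \<circ> lam i" using nl grp Q_grp by (simp add: group_hom_def group_hom_axioms_def)
      have "(nu \<circ> lam i) ` a ` {1..n} \<subseteq> M"
      proof
        fix q assume "q \<in> (nu \<circ> lam i) ` a ` {1..n}"
        then obtain j where j: "j \<in> {1..n}" "q = nu (lam i (a j))" by auto
        show "q \<in> M"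
        proof (cases "j \<in> S i")
          case True
          then have "(i, j) \<in> E" using i by (simp add: E_def)
          then show ?thesis using stepa[of "(i, j)"] j by (simp add: eps_def)
        next
          case False
          then show ?thesis using j R0[OF i j(1) False] hom_one[OF nu_hom K_grp Q_grp]
              subgroup.one_closed[OF M_sub] by simp
        qed
      qed
      then have "generate Q ((nu \<circ> lam i) ` a ` {1..n}) \<subseteq> M"
        by (rule group.generate_subgroup_incl[OF Q_grp _ M_sub])
      then have "(nu \<circ> lam i) ` carrier G \<subseteq> M"
        using nl.generate_img[OF a_carr] a_gen by simp
      then show "(nu \<circ> cls) (emb I BG i (yy i)) \<in> M" using x by (auto simp: lam_def)
    qed
    finally show "y \<in> M" .
  qed
  have sumI: "(\<Sum>f\<in>E. ww f * incv t hh (Inl i) f) = (\<Sum>j\<in>S i. ww (i, j))" if i: "i \<in> I" for i and ww :: "nat \<times> nat \<Rightarrow> int"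
  proof -
    have "(\<Sum>f\<in>E. ww f * incv t hh (Inl i) f) = (\<Sum>f\<in>E. if t f = Inl i then ww f else 0)"
      by (intro sum.cong) (auto simp: incv_def t_def hh_def)
    also have "\<dots> = (\<Sum>f\<in>{f\<in>E. t f = Inl i}. ww f)" using E_fin by (simp add: sum.inter_filter)
    also have "\<dots> = (\<Sum>j\<in>S i. ww (i, j))" unfolding fibI[OF i] by (subst sum.reindex) (auto simp: inj_on_def)
    finally show ?thesis .
  qed
  have sumJ: "(\<Sum>f\<in>E. ww f * incv t hh (Inr j) f) = - (\<Sum>i\<in>{i\<in>I. j \<in> S i}. ww (i, j))" for j and ww :: "nat \<times> nat \<Rightarrow> int"
  proof -
    have "(\<Sum>f\<in>E. ww f * incv t hh (Inr j) f) = - (\<Sum>f\<in>E. if hh f = Inr j then ww f else 0)"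
      by (simp add: sum_negf[symmetric]) (intro sum.cong, auto simp: incv_def t_def hh_def)
    also have "(\<Sum>f\<in>E. if hh f = Inr j then ww f else 0) = (\<Sum>f\<in>{f\<in>E. hh f = Inr j}. ww f)"
      using E_fin by (simp add: sum.inter_filter)
    also have "\<dots> = (\<Sum>i\<in>{i\<in>I. j \<in> S i}. ww (i, j))" unfolding fibJ by (subst sum.reindex) (auto simp: inj_on_def)
    finally show ?thesis .
  qed
  have Z_grp: "group integer_group" by simp
  have Om_ex: "\<exists>Om \<in> hom Q integer_group. \<forall>e\<in>E. Om (eps e) = w b e" if b: "b \<in> B" for b
  proof -
    have "\<forall>i\<in>I. \<exists>g. g \<in> hom G integer_group \<and> (\<forall>j\<in>{1..n}. g (a j) = (if j \<in> S i then w b (i, j) else 0))"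
    proof
      fix i assume "i \<in> I"
      from basis_hom_int[OF grp G_ab a_carr, of "\<lambda>j. if j \<in> S i then w b (i, j) else 0"]
      show "\<exists>g. g \<in> hom G integer_group \<and> (\<forall>j\<in>{1..n}. g (a j) = (if j \<in> S i then w b (i, j) else 0))"
        by blast
    qed
    from bchoice[OF this] obtain gg where gg0: "\<forall>i\<in>I. gg i \<in> hom G integer_group \<and>
        (\<forall>j\<in>{1..n}. gg i (a j) = (if j \<in> S i then w b (i, j) else 0))" by blast
    have gg: "\<And>i. i \<in> I \<Longrightarrow> gg i \<in> hom G integer_group"
      "\<And>i j. i \<in> I \<Longrightarrow> j \<in> {1..n} \<Longrightarrow> gg i (a j) = (if j \<in> S i then w b (i, j) else 0)"
      using gg0 by blast+
    have "\<forall>i\<in>I. \<exists>o2. o2 \<in> hom (BG i) integer_group \<and> (\<forall>x\<in>carrier G. o2 (bp i (P i x)) = gg i x)"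
    proof
      fix i assume i: "i \<in> I"
      have kill1: "gg i y = \<one>\<^bsub>integer_group\<^esub>" if "y \<in> Nc i" for y
      proof (rule normal_closure_kill[OF grp Z_grp Nc_sub gg(1)[OF i] _ that[unfolded Nc_def]])
        fix q assume "q \<in> a ` ({1..n} - S i)"
        then obtain j where "j \<in> {1..n}" "j \<notin> S i" "q = a j" by blast
        then show "gg i q = \<one>\<^bsub>integer_group\<^esub>" using gg(2)[OF i] by simp
      qed
      obtain o1 where o1a: "o1 \<in> hom (G Mod Nc i) integer_group"
        and o1b: "\<And>x. x \<in> carrier G \<Longrightarrow> o1 (Nc i #>\<^bsub>G\<^esub> x) = gg i x"
        using quot_hom_ex[OF grp Nc_normal gg(1)[OF i] Z_grp kill1] by blast
      have o1: "o1 \<in> hom (GSi i) integer_group" "\<And>x. x \<in> carrier G \<Longrightarrow> o1 (P i x) = gg i x"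
        using o1a o1b unfolding GSi_eq P_eq by auto
      have "o1 (zs i) = gg i z" using o1(2)[OF zc] zs_eq by simp
      also have "\<dots> = ordprod integer_group (gg i \<circ> a) n"
        unfolding z_def by (rule ordprod_hom[OF gg(1)[OF i] grp Z_grp a_carr])
      also have "\<dots> = finprod integer_group (gg i \<circ> a) {1..n}"
        by (rule ordprod_finprod) (auto simp: abelian_integer_group comm_group.axioms(1))
      also have "\<dots> = (\<Sum>j\<in>{1..n}. gg i (a j))" by (simp add: finprod_integer_group)
      also have "\<dots> = (\<Sum>j\<in>{1..n}. if j \<in> S i then w b (i, j) else 0)" using gg(2)[OF i] by simp
      also have "\<dots> = (\<Sum>j\<in>{j\<in>{1..n}. j \<in> S i}. w b (i, j))"
        by (rule sum.inter_filter[symmetric]) simp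
      also have "{j\<in>{1..n}. j \<in> S i} = S i" using SnI[OF i] by blast
      also have "(\<Sum>j\<in>S i. w b (i, j)) = 0"
      proof -
        have "(\<Sum>f\<in>E. w b f * incv t hh (Inl i) f) = 0" using gb b by blast
        then show ?thesis using sumI[OF i, of "w b"] by simp
      qed
      finally have o1z: "o1 (zs i) = \<one>\<^bsub>integer_group\<^esub>" by simp
      have kill2: "o1 y = \<one>\<^bsub>integer_group\<^esub>" if "y \<in> Zi i" for y
      proof (rule generate_kill[OF GSi_grp Z_grp o1(1) _ _ that[unfolded Zi_def]])
        show "{zs i} \<subseteq> carrier (GSi i)" using zs_c by simp
        fix q assume "q \<in> {zs i}"
        then show "o1 q = \<one>\<^bsub>integer_group\<^esub>" using o1z by simp
      qed
      obtain o2 where o2a: "o2 \<in> hom (GSi i Mod Zi i) integer_group"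
        and o2b: "\<And>y. y \<in> carrier (GSi i) \<Longrightarrow> o2 (Zi i #>\<^bsub>GSi i\<^esub> y) = o1 y"
        using quot_hom_ex[OF GSi_grp Zi_normal o1(1) Z_grp kill2] by blast
      have o2: "o2 \<in> hom (BG i) integer_group" "\<And>y. y \<in> carrier (GSi i) \<Longrightarrow> o2 (bp i y) = o1 y"
        using o2a o2b unfolding BG_eq bp_eq by auto
      have "\<forall>x\<in>carrier G. o2 (bp i (P i x)) = gg i x"
        using o2(2) o1(2) hom_in_carrier[OF P_hom] by simp
      then show "\<exists>o2. o2 \<in> hom (BG i) integer_group \<and> (\<forall>x\<in>carrier G. o2 (bp i (P i x)) = gg i x)"
        using o2(1) by blast
    qed
    from bchoice[OF this] obtain oo where oo0: "\<forall>i\<in>I. oo i \<in> hom (BG i) integer_group \<and>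
        (\<forall>x\<in>carrier G. oo i (bp i (P i x)) = gg i x)" by blast
    have oo: "\<And>i. i \<in> I \<Longrightarrow> oo i \<in> hom (BG i) integer_group"
      "\<And>i x. i \<in> I \<Longrightarrow> x \<in> carrier G \<Longrightarrow> oo i (bp i (P i x)) = gg i x"
      using oo0 by blast+
    define Om1 where "Om1 yy = (\<Sum>i\<in>I. oo i (yy i))" for yy
    have Om1_hom: "Om1 \<in> hom barA integer_group"
      unfolding Om1_def[abs_def] barA_def by (rule sum_hom_product[OF oo(1)])
    obtain Om2 where Om2: "Om2 \<in> hom K integer_group" "\<And>yy. yy \<in> carrier barA \<Longrightarrow> Om2 (cls yy) = Om1 yy"
      using ab_desc[OF barA_grp abelian_integer_group Om1_hom] unfolding K_def cls_def by blast
    have gam: "Om2 (psi x) = 0" if x: "x \<in> carrier G" for x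
    proof -
      have gh: "Om2 \<circ> psi \<in> hom G integer_group" by (rule hom_compose[OF psi_hom Om2(1)])
      have gaj: "(Om2 \<circ> psi) (a j) = \<one>\<^bsub>integer_group\<^esub>" if j: "j \<in> {1..n}" for j
      proof -
        have ajc: "a j \<in> carrier G" using a_carr j by auto
        have "(Om2 \<circ> psi) (a j) = Om1 (Rx (a j))" using Om2(2) hom_in_carrier[OF Rx_hom ajc] by (simp add: psi_def)
        also have "\<dots> = (\<Sum>i\<in>I. gg i (a j))" unfolding Om1_def Rx_def using oo(2) ajc by simp
        also have "\<dots> = (\<Sum>i\<in>I. if j \<in> S i then w b (i, j) else 0)" using gg(2) j by simp
        also have "\<dots> = (\<Sum>i\<in>{i\<in>I. j \<in> S i}. w b (i, j))"
          by (rule sum.inter_filter[symmetric]) (simp add: I_def)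
        also have "\<dots> = 0"
        proof -
          have "(\<Sum>f\<in>E. w b f * incv t hh (Inr j) f) = 0" using gb b by blast
          then show ?thesis using sumJ[of "w b" j] by simp
        qed
        finally show ?thesis by simp
      qed
      have "(Om2 \<circ> psi) x = \<one>\<^bsub>integer_group\<^esub>"
      proof (rule generate_kill[OF grp Z_grp gh a_carr])
        fix q assume "q \<in> a ` {1..n}"
        then obtain j where "j \<in> {1..n}" "q = a j" by blast
        then show "(Om2 \<circ> psi) q = \<one>\<^bsub>integer_group\<^esub>" using gaj by simp
      qed (use x a_gen in simp)
      then show ?thesis by simp
    qed
    have kill3: "Om2 q = \<one>\<^bsub>integer_group\<^esub>" if "q \<in> N" for q
      using that gam unfolding N_eq by auto
    obtain Om where Om0a: "Om \<in> hom (K Mod N) integer_group"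
      and Om0b: "\<And>k. k \<in> carrier K \<Longrightarrow> Om (N #>\<^bsub>K\<^esub> k) = Om2 k"
      using quot_hom_ex[OF K_grp N_normal Om2(1) Z_grp kill3] by blast
    have Om: "Om \<in> hom Q integer_group" "\<And>k. k \<in> carrier K \<Longrightarrow> Om (nu k) = Om2 k"
      using Om0a Om0b unfolding Q_def nu_def by auto
    have "Om (eps e) = w b e" if e: "e \<in> E" for e
    proof -
      obtain i j where ij: "e = (i, j)" "i \<in> I" "j \<in> S i" using e by (auto simp: E_def)
      have jn: "j \<in> {1..n}" using ij Sn by blast
      have ajc: "a j \<in> carrier G" using a_carr jn by auto
      define Y where "Y = bp i (P i (a j))"
      have Yc: "Y \<in> carrier (BG i)" unfolding Y_def
        using hom_in_carrier[OF bp_hom hom_in_carrier[OF P_hom ajc]] .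
      have "Om (eps e) = Om2 (lam i (a j))"
        using Om(2) hom_in_carrier[OF lam_hom[OF ij(2)] ajc] by (simp add: eps_def ij(1))
      also have "\<dots> = Om1 (emb I BG i Y)"
        using Om2(2) hom_in_carrier[OF emb_h[OF ij(2)] Yc] by (simp add: lam_def Y_def)
      also have "\<dots> = (\<Sum>i'\<in>I. if i' = i then oo i Y else 0)"
        unfolding Om1_def
      proof (rule sum.cong)
        fix i' assume i': "i' \<in> I"
        show "oo i' (emb I BG i Y i') = (if i' = i then oo i Y else 0)"
          using i' hom_one[OF oo(1)[OF i'] BG_grp Z_grp] by (simp add: emb_def)
      qed simp
      also have "\<dots> = oo i Y" using ij(2) by (simp add: I_def)
      also have "\<dots> = gg i (a j)" unfolding Y_def using oo(2)[OF ij(2) ajc] .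
      also have "\<dots> = w b e" using gg(2)[OF ij(2) jn] ij by simp
      finally show ?thesis .
    qed
    then show ?thesis using Om(1) by blast
  qed
  have inj0: "x = 0" if x: "x \<in> carrier (free_Abelian_group B)" "Phi x = \<one>\<^bsub>Q\<^esub>" for x
  proof -
    have "Poly_Mapping.lookup x b = 0" if b: "b \<in> B" for b
    proof -
      interpret Q: comm_group Q by (rule Q_comm)
      obtain Om where Om: "Om \<in> hom Q integer_group" "\<forall>e\<in>E. Om (eps e) = w b e" using Om_ex[OF b] by blast
      have "0 = Om (Phi x)" using x(2) hom_one[OF Om(1) Q_grp Z_grp] by simp
      also have "\<dots> = (\<Sum>s\<in>B. Om (eps s [^]\<^bsub>Q\<^esub> Poly_Mapping.lookup x s))"
        unfolding Phi_def fmap_def using epsB by (intro hom_finprod_int[OF Q_comm Om(1) B_fin]) auto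
      also have "\<dots> = (\<Sum>s\<in>B. Poly_Mapping.lookup x s * w b s)"
      proof (rule sum.cong)
        fix s assume s: "s \<in> B"
        have "eps s \<in> carrier Q" using epsB s by auto
        then have "Om (eps s [^]\<^bsub>Q\<^esub> Poly_Mapping.lookup x s) = Poly_Mapping.lookup x s * Om (eps s)"
          by (rule hom_pow_int[OF Q_grp Om(1)])
        also have "Om (eps s) = w b s" using Om(2) s B by auto
        finally show "Om (eps s [^]\<^bsub>Q\<^esub> Poly_Mapping.lookup x s) = Poly_Mapping.lookup x s * w b s" .
      qed simp
      also have "\<dots> = (\<Sum>s\<in>B. if b = s then Poly_Mapping.lookup x s else 0)"
        using gc b by (intro sum.cong) auto
      also have "\<dots> = Poly_Mapping.lookup x b" using b B_fin by simp
      finally show ?thesis by simp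
    qed
    moreover have "\<forall>j. j \<notin> B \<longrightarrow> Poly_Mapping.lookup x j = 0"
      using x by (auto simp: in_keys_iff)
    ultimately show ?thesis by (intro poly_mapping_eqI) auto
  qed
  have Phi_iso: "Phi \<in> iso (free_Abelian_group B) Q"
    using surj inj0 unfolding Phi.iso_iff M_def by auto
  have Q_iso: "Q \<cong> free_Abelian_group B"
    using group.iso_sym[OF group_free_Abelian_group] Phi_iso is_isoI by blast
  have eps_inj: "inj_on eps B"
  proof (rule inj_onI)
    fix b b' assume bb: "b \<in> B" "b' \<in> B" "eps b = eps b'"
    have "Phi (frag_of b) = Phi (frag_of b')"
      using bb fmap_frag[OF Q_comm B_fin epsB] by (simp add: Phi_def)
    then have "frag_of b = frag_of b'"
      using Phi_iso bb unfolding iso_iff inj_on_def by auto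
    then show "b = b'" by (simp add: frag_of_eq)
  qed
  have "free_Abelian_group B \<cong> free_Abelian_group (eps ` B)"
    unfolding isomorphic_free_Abelian_groups using eqpoll_sym[OF inj_on_image_eqpoll_self[OF eps_inj]] .
  then have "Q \<cong> free_Abelian_group (eps ` B)" using Q_iso iso_trans by blast
  then show ?thesis unfolding coker_eq free_abelian_def using Q_comm by blast
qed


end
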